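(* Let $T$ and $A$ be closed Hermitian subspaces in $X^2$ and $S$ a self-adjoint subspace in $X^2$, with $D(T)=D(S)=:D\subset D(A)$ and $T=S+A$, and assume $\rho(T)\cap\rho(S)\neq\emptyset$. Let $Q:A(0)^\perp\to S(0)^\perp$ be the orthogonal projection (note $S(0)^\perp\subset A(0)^\perp$ under these hypotheses). (i) If $QA_s$ is $S_s$-compact, then $T$ is a compact perturbation of $S$. (ii) If $T$ is a compact perturbation of $S$ and $T_s$ is a bounded operator on $D$, then $QA_s$ is $S_s$-compact.
   Context: $X$ is a complex Hilbert space and $X^2=X\times X$ carries the inner product $\langle (x,f),(y,g)\rangle=\langle x,y\rangle+\langle f,g\rangle$. A subspace $T$ in $X^2$ means a linear subspace of $X^2$ (a linear relation); a linear operator in $X$ is identified with its graph. Notation: $D(T)=\{x:(x,f)\in T \text{ for some } f\}$, $T(x)=\{f:(x,f)\in T\}$, $T^{-1}=\{(f,x):(x,f)\in T\}$, $\lambda I$ is the graph of $x\mapsto \lambda x$. The adjoint is $T^*=\{(y,g)\in X^2:\langle g,x\rangle=\langle y,f\rangle \text{ for all }(x,f)\in T\}$; $T$ is Hermitian if $T\subset T^*$ and self-adjoint if $T=T^*$. For subspaces $S,A$ in $X^2$, $S+A=\{(x,f+g):(x,f)\in S,(x,g)\in A\}$. For a closed subspace $T$, set $T_\infty=\{(0,g)\in X^2:(0,g)\in T\}$ and $T_s=T\ominus T_\infty$ (orthogonal complement of $T_\infty$ in $T$), so $T=T_s\oplus T_\infty$; $T_s$ is the graph of a linear operator (the operator part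 of $T$) with $D(T_s)=D(T)$ and $R(T_s)\subset T(0)^\perp$. Resolvent set: $\rho(T)=\{\lambda\in\mathbb C:(\lambda I-T)^{-1}$ is a bounded linear operator defined on all of $X\}$. For linear operators $U,V$ in $X$ with $D(V)\subset D(U)$: $U$ is $V$-compact if $U|_{D(V)}$ is compact as a map from $(D(V),\|\cdot\|_V)$ into $X$, where $\|x\|_V=\|x\|+\|Vx\|$. Compact perturbation: for closed subspaces $T,S$ in $X^2$ with orthogonal projections $P_T,P_S$ of $X^2$ onto $T$, $S$, $T$ is a compact perturbation of $S$ if $P_T-P_S$ is a compact operator. *)

theory Defs
  imports "HOL-Analysis.Analysis"
begin

text \<open>HOL-Analysis only provides real inner product spaces, so we introduce complex
vector spaces, complex inner product spaces and complex Hilbert spaces as type classes.\<close>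

class complex_vector = real_vector +
  fixes scaleC :: "complex \<Rightarrow> 'a \<Rightarrow> 'a"
  assumes scaleC_add_right: "scaleC a (x + y) = scaleC a x + scaleC a y"
    and scaleC_add_left: "scaleC (a + b) x = scaleC a x + scaleC b x"
    and scaleC_scaleC: "scaleC a (scaleC b x) = scaleC (a * b) x"
    and scaleC_one: "scaleC 1 x = x"
    and scaleR_scaleC: "scaleR r x = scaleC (complex_of_real r) x"

class complex_inner = complex_vector + real_normed_vector +
  fixes cinner :: "'a \<Rightarrow> 'a \<Rightarrow> complex"
  assumes cinner_commute: "cinner x y = cnj (cinner y x)"
    and cinner_add_left: "cinner (x + y) z = cinner x z + cinner y z"
    and cinner_scaleC_left: "cinner (scaleC r x) y = r * cinner x y"
    and cinner_self_real: "Im (cinner x x) = 0"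
    and cinner_self_nonneg: "0 \<le> Re (cinner x x)"
    and cinner_eq_zero_iff: "cinner x x = 0 \<longleftrightarrow> x = 0"
    and norm_eq_sqrt_cinner: "norm x = sqrt (Re (cinner x x))"

class chilbert_space = complex_inner + complete_space

definition rel_subspace :: "('a::complex_vector \<times> 'a) set \<Rightarrow> bool" where
  "rel_subspace T \<longleftrightarrow> (0,0) \<in> T \<and> (\<forall>p\<in>T. \<forall>q\<in>T. (fst p + fst q, snd p + snd q) \<in> T)
     \<and> (\<forall>c. \<forall>p\<in>T. (scaleC c (fst p), scaleC c (snd p)) \<in> T)"

definition pinner :: "('a::complex_inner \<times> 'a) \<Rightarrow> ('a \<times> 'a) \<Rightarrow> complex" where
  "pinner p q = cinner (fst p) (fst q) + cinner (snd p) (snd q)"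

definition Dom :: "('a \<times> 'a) set \<Rightarrow> 'a set" where
  "Dom T = {x. \<exists>f. (x, f) \<in> T}"

definition relapp :: "('a \<times> 'a) set \<Rightarrow> 'a \<Rightarrow> 'a set" where
  "relapp T x = {f. (x, f) \<in> T}"

definition relinv :: "('a \<times> 'a) set \<Rightarrow> ('a \<times> 'a) set" where
  "relinv T = {(f, x). (x, f) \<in> T}"

definition graph :: "('a \<Rightarrow> 'a) \<Rightarrow> ('a \<times> 'a) set" where
  "graph B = {(x, B x) | x. True}"

definition scal_id :: "complex \<Rightarrow> ('a::complex_vector \<times> 'a) set" where
  "scal_id c = {(x, scaleC c x) | x. True}"

definition relsum :: "('a::ab_group_add \<times> 'a) set \<Rightarrow> ('a \<times> 'a) set \<Rightarrow> ('a \<times> 'a) set" where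
  "relsum S A = {(x, f + g) | x f g. (x, f) \<in> S \<and> (x, g) \<in> A}"

definition relneg :: "('a::ab_group_add \<times> 'a) set \<Rightarrow> ('a \<times> 'a) set" where
  "relneg T = {(x, - f) | x f. (x, f) \<in> T}"

definition adj :: "('a::complex_inner \<times> 'a) set \<Rightarrow> ('a \<times> 'a) set" where
  "adj T = {(y, g). \<forall>(x, f) \<in> T. cinner g x = cinner y f}"

definition hermitian :: "('a::complex_inner \<times> 'a) set \<Rightarrow> bool" where
  "hermitian T \<longleftrightarrow> rel_subspace T \<and> T \<subseteq> adj T"

definition self_adjoint :: "('a::complex_inner \<times> 'a) set \<Rightarrow> bool" where
  "self_adjoint T \<longleftrightarrow> rel_subspace T \<and> T = adj T"

definition mul_part :: "('a::zero \<times> 'a) set \<Rightarrow> ('a \<times> 'a) set" where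
  "mul_part T = {(0, g) | g. (0, g) \<in> T}"

definition op_part :: "('a::complex_inner \<times> 'a) set \<Rightarrow> ('a \<times> 'a) set" where
  "op_part T = {p \<in> T. \<forall>q \<in> mul_part T. pinner p q = 0}"

text \<open>The operator whose graph is \<open>T\<^sub>s\<close> (meaningful on \<open>D(T)\<close>).\<close>
definition op_fun :: "('a::complex_inner \<times> 'a) set \<Rightarrow> 'a \<Rightarrow> 'a" where
  "op_fun T x = (THE f. (x, f) \<in> op_part T)"

definition clinear_map :: "('a::complex_vector \<Rightarrow> 'a) \<Rightarrow> bool" where
  "clinear_map B \<longleftrightarrow> (\<forall>x y. B (x + y) = B x + B y) \<and> (\<forall>c x. B (scaleC c x) = scaleC c (B x))"

definition bounded_everywhere_op :: "('a::complex_inner \<times> 'a) set \<Rightarrow> bool" where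
  "bounded_everywhere_op R \<longleftrightarrow>
     (\<exists>B. clinear_map B \<and> (\<exists>K. \<forall>x. norm (B x) \<le> K * norm x) \<and> R = graph B)"

definition resolvent_set :: "('a::complex_inner \<times> 'a) set \<Rightarrow> complex set" where
  "resolvent_set T = {c. bounded_everywhere_op (relinv (relsum (scal_id c) (relneg T)))}"

definition ortho :: "'a::complex_inner set \<Rightarrow> 'a set" where
  "ortho M = {x. \<forall>y\<in>M. cinner x y = 0}"

definition proj :: "'a::complex_inner set \<Rightarrow> 'a \<Rightarrow> 'a" where
  "proj M x = (THE y. y \<in> M \<and> (\<forall>z\<in>M. cinner (x - y) z = 0))"

definition proj2 :: "('a::complex_inner \<times> 'a) set \<Rightarrow> ('a \<times> 'a) \<Rightarrow> ('a \<times> 'a)" where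
  "proj2 M p = (THE q. q \<in> M \<and> (\<forall>z\<in>M. pinner (p - q) z = 0))"

definition compact_operator :: "('a::real_normed_vector \<Rightarrow> 'b::real_normed_vector) \<Rightarrow> bool" where
  "compact_operator K \<longleftrightarrow> (\<forall>B. bounded B \<longrightarrow> compact (closure (K ` B)))"

definition compact_perturbation :: "('a::complex_inner \<times> 'a) set \<Rightarrow> ('a \<times> 'a) set \<Rightarrow> bool" where
  "compact_perturbation T S \<longleftrightarrow> compact_operator (\<lambda>p. proj2 T p - proj2 S p)"

definition rel_compact :: "('a::real_normed_vector \<Rightarrow> 'a) \<Rightarrow> ('a \<Rightarrow> 'a) \<Rightarrow> 'a set \<Rightarrow> bool" where
  "rel_compact U V D \<longleftrightarrow>
     (\<forall>B \<subseteq> D. (\<exists>K. \<forall>x\<in>B. norm x + norm (V x) \<le> K) \<longrightarrow> compact (closure (U ` B)))"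

end

theory Submission
  imports Defs
begin


locale cip =
  fixes ip :: "'b::{real_normed_vector,complete_space} \<Rightarrow> 'b \<Rightarrow> complex" and sc :: "complex \<Rightarrow> 'b \<Rightarrow> 'b"
  assumes ip_add: "ip (x + y) z = ip x z + ip y z"
  and ip_sc: "ip (sc c x) y = c * ip x y"
  and ip_commute: "ip x y = cnj (ip y x)"
  and ip_norm: "norm x = sqrt (Re (ip x x))"
  and ip_real: "Im (ip x x) = 0"
  and sc_add: "sc c (x + y) = sc c x + sc c y"
  and sc_real: "sc (complex_of_real r) x = r *\<^sub>R x"
begin

lemma ip_zero_left[simp]: "ip 0 y = 0"
  using ip_add[of 0 0 y] by simp
lemma ip_zero_right[simp]: "ip x 0 = 0"
  using ip_commute[of x 0] by simp
lemma ip_minus_left: "ip (- x) y = - ip x y"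
proof -
  have "ip x y + ip (-x) y = 0" using ip_add[of x "-x" y] by simp
  thus ?thesis by (simp add: add_eq_0_iff)
qed
lemma ip_diff_left: "ip (x - y) z = ip x z - ip y z"
  using ip_add[of x "-y" z] ip_minus_left[of y z] by simp
lemma ip_add_right: "ip x (y + z) = ip x y + ip x z"
  using ip_commute[of x "y+z"] ip_add[of y z x] ip_commute[of y x] ip_commute[of z x] by simp
lemma ip_minus_right: "ip x (- y) = - ip x y"
  using ip_commute[of x "-y"] ip_minus_left[of y x] ip_commute[of y x] by simp
lemma ip_diff_right: "ip x (y - z) = ip x y - ip x z"
  using ip_add_right[of x y "-z"] ip_minus_right[of x z] by simp
lemma ip_sc_right': "ip x (sc c y) = cnj c * ip x y"
  using ip_commute[of x "sc c y"] ip_sc[of c y x] ip_commute[of y x] by simp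
lemma ip_scaleR_left: "ip (r *\<^sub>R x) y = complex_of_real r * ip x y"
  using sc_real[of r x] ip_sc[of "complex_of_real r" x y] by simp
lemma ip_scaleR_right: "ip x (r *\<^sub>R y) = complex_of_real r * ip x y"
  using sc_real[of r y] ip_sc_right'[of x "complex_of_real r" y] by simp

lemma sc_zero[simp]: "sc c 0 = 0"
  using sc_add[of c 0 0] by simp
lemma sc_minus: "sc c (- x) = - sc c x"
proof -
  have "sc c x + sc c (-x) = 0" using sc_add[of c x "-x"] by simp
  thus ?thesis by (simp add: add_eq_0_iff)
qed
lemma sc_diff: "sc c (x - y) = sc c x - sc c y"
  using sc_add[of c x "-y"] sc_minus[of c y] by simp

lemma ip_self_Re: "Re (ip x x) = (norm x)\<^sup>2"
proof -
  have "0 \<le> sqrt (Re (ip x x))" using ip_norm[of x] norm_ge_zero[of x] by metis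
  hence "0 \<le> Re (ip x x)" by (metis real_sqrt_ge_0_iff)
  thus ?thesis using ip_norm[of x] by simp
qed
lemma ip_self: "ip x x = complex_of_real ((norm x)\<^sup>2)"
  using ip_self_Re[of x] ip_real[of x] by (simp add: complex_eq_iff)

lemma norm_add_sq: "(norm (x + y))\<^sup>2 = (norm x)\<^sup>2 + (norm y)\<^sup>2 + 2 * Re (ip x y)"
proof -
  have "ip (x+y) (x+y) = ip x x + ip y y + ip x y + ip y x"
    by (simp add: ip_add ip_add_right)
  hence "Re (ip (x+y) (x+y)) = Re (ip x x) + Re (ip y y) + Re (ip x y) + Re (ip y x)" by simp
  moreover have "Re (ip y x) = Re (ip x y)" by (subst ip_commute) simp
  ultimately show ?thesis by (simp add: ip_self_Re)
qed
lemma norm_diff_sq: "(norm (x - y))\<^sup>2 = (norm x)\<^sup>2 + (norm y)\<^sup>2 - 2 * Re (ip x y)"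
  using norm_add_sq[of x "-y"] by (simp add: ip_minus_right)

lemma norm_sc: "norm (sc c x) = cmod c * norm x"
proof -
  have "ip (sc c x) (sc c x) = c * cnj c * ip x x"
    by (simp add: ip_sc ip_sc_right')
  also have "c * cnj c = complex_of_real ((cmod c)\<^sup>2)" by (rule complex_norm_square[symmetric])
  finally have "(norm (sc c x))\<^sup>2 = (cmod c)\<^sup>2 * (norm x)\<^sup>2"
    by (metis ip_self Re_complex_of_real of_real_mult)
  hence "(norm (sc c x))\<^sup>2 = (cmod c * norm x)\<^sup>2" by (simp add: power_mult_distrib)
  thus ?thesis by (simp add: power2_eq_iff_nonneg)
qed

lemma CS: "cmod (ip x y) \<le> norm x * norm y"
proof (cases "y = 0")
  case True thus ?thesis by simp
next
  case False
  define w where "w = ip x y"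
  define n where "n = (norm y)\<^sup>2"
  have n0: "n > 0" using False by (simp add: n_def)
  define t where "t = w / complex_of_real n"
  have "ip (x - sc t y) (x - sc t y) = ip x x - cnj t * ip x y - t * ip y x + t * cnj t * ip y y"
    by (simp add: ip_diff_left ip_diff_right ip_sc ip_sc_right' algebra_simps)
  also have "ip y x = cnj w" by (simp add: w_def ip_commute[of y x])
  also have "ip y y = complex_of_real n" by (simp add: n_def ip_self)
  finally have e: "ip (x - sc t y) (x - sc t y) = ip x x - cnj t * w - t * cnj w + t * cnj t * complex_of_real n"
    by (simp add: w_def)
  have wn: "w * cnj w = complex_of_real ((cmod w)\<^sup>2)" by (rule complex_norm_square[symmetric])
  have "cnj t * w = (w * cnj w) / complex_of_real n"
    by (simp add: t_def)
  hence "cnj t * w = complex_of_real ((cmod w)\<^sup>2 / n)" by (simp add: wn)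
  moreover have "t * cnj w = (w * cnj w) / complex_of_real n"
    by (simp add: t_def)
  hence "t * cnj w = complex_of_real ((cmod w)\<^sup>2 / n)" by (simp add: wn)
  moreover have "t * cnj t * complex_of_real n = (w * cnj w) / complex_of_real n"
    using n0 by (simp add: t_def power2_eq_square field_simps)
  hence "t * cnj t * complex_of_real n = complex_of_real ((cmod w)\<^sup>2 / n)" by (simp add: wn)
  ultimately have "Re (ip (x - sc t y) (x - sc t y)) = (norm x)\<^sup>2 - (cmod w)\<^sup>2 / n"
    using e by (simp add: ip_self_Re)
  moreover have "Re (ip (x - sc t y) (x - sc t y)) \<ge> 0" by (simp add: ip_self_Re)
  ultimately have "(cmod w)\<^sup>2 / n \<le> (norm x)\<^sup>2" by simp
  hence "(cmod w)\<^sup>2 \<le> (norm x)\<^sup>2 * n" using n0 by (simp add: field_simps)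
  hence "(cmod w)\<^sup>2 \<le> (norm x * norm y)\<^sup>2" by (simp add: n_def power_mult_distrib)
  hence "cmod w \<le> norm x * norm y" using power2_le_imp_le[of "cmod w" "norm x * norm y"] by simp
  thus ?thesis unfolding w_def .
qed

lemma bb: "bounded_bilinear ip"
proof
  fix a a' b b' :: 'b and r :: real
  show "ip (a + a') b = ip a b + ip a' b" by (rule ip_add)
  show "ip a (b + b') = ip a b + ip a b'" by (rule ip_add_right)
  show "ip (r *\<^sub>R a) b = r *\<^sub>R ip a b" by (simp add: ip_scaleR_left scaleR_conv_of_real)
  show "ip a (r *\<^sub>R b) = r *\<^sub>R ip a b" by (simp add: ip_scaleR_right scaleR_conv_of_real)
next
  show "\<exists>K. \<forall>a b. norm (ip a b) \<le> norm a * norm b * K"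
    by (rule exI[of _ 1]) (simp add: CS)
qed

end


lemma quad_aux:
  fixes a b :: real
  assumes "\<And>t. 2*t*a \<le> t^2*b" shows "a = 0"
proof -
  define c where "c = \<bar>b\<bar> + 1"
  have c0: "c > 0" by (simp add: c_def)
  have h: "2*(a/c)*a \<le> (a/c)^2*b" by (rule assms)
  have "(2*(a/c)*a) * c^2 \<le> ((a/c)^2*b) * c^2" by (rule mult_right_mono[OF h]) simp
  hence "2*a*a*c \<le> a*a*b" using c0 by (simp add: field_simps power2_eq_square)
  moreover have "a*a*b \<le> a*a*\<bar>b\<bar>" by (simp add: mult_left_mono)
  ultimately have le: "a*a*(2*c - \<bar>b\<bar>) \<le> 0" by (simp add: algebra_simps)
  have p: "2*c - \<bar>b\<bar> > 0" by (simp add: c_def)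
  have "a*a*(2*c - \<bar>b\<bar>) = 0" using le mult_nonneg_nonneg[OF zero_le_square[of a] less_imp_le[OF p]] by linarith
  hence "a*a = 0" using p by simp
  thus ?thesis by simp
qed

context cip begin

definition subsp :: "'b set \<Rightarrow> bool" where
  "subsp M \<longleftrightarrow> 0 \<in> M \<and> (\<forall>a\<in>M. \<forall>b\<in>M. a + b \<in> M) \<and> (\<forall>c. \<forall>a\<in>M. sc c a \<in> M)"
definition orthp :: "'b set \<Rightarrow> 'b \<Rightarrow> 'b \<Rightarrow> bool" where
  "orthp M x y \<longleftrightarrow> y \<in> M \<and> (\<forall>z\<in>M. ip (x - y) z = 0)"
definition projn :: "'b set \<Rightarrow> 'b \<Rightarrow> 'b" where
  "projn M x = (THE y. orthp M x y)"
definition orth :: "'b set \<Rightarrow> 'b set" where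
  "orth M = {x. \<forall>y\<in>M. ip x y = 0}"

lemma subsp_0: "subsp M \<Longrightarrow> 0 \<in> M" by (simp add: subsp_def)
lemma subsp_add: "subsp M \<Longrightarrow> a \<in> M \<Longrightarrow> b \<in> M \<Longrightarrow> a + b \<in> M" by (simp add: subsp_def)
lemma subsp_sc: "subsp M \<Longrightarrow> a \<in> M \<Longrightarrow> sc c a \<in> M" by (simp add: subsp_def)
lemma subsp_scaleR: "subsp M \<Longrightarrow> a \<in> M \<Longrightarrow> r *\<^sub>R a \<in> M"
  using subsp_sc[of M a "complex_of_real r"] by (simp add: sc_real)
lemma subsp_minus: "subsp M \<Longrightarrow> a \<in> M \<Longrightarrow> - a \<in> M"
  using subsp_scaleR[of M a "-1"] by simp
lemma subsp_diff: "subsp M \<Longrightarrow> a \<in> M \<Longrightarrow> b \<in> M \<Longrightarrow> a - b \<in> M"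
  using subsp_add[of M a "-b"] subsp_minus[of M b] by simp

lemma ip_self_eq0: "ip x x = 0 \<Longrightarrow> x = 0"
  using ip_self[of x] by simp

lemma orthp_unique: assumes "subsp M" "orthp M x y1" "orthp M x y2" shows "y1 = y2"
proof -
  have m: "y1 - y2 \<in> M" using assms subsp_diff unfolding orthp_def by blast
  have "ip (y1 - y2) (y1 - y2) = ip (x - y2) (y1 - y2) - ip (x - y1) (y1 - y2)"
    by (simp add: ip_diff_left)
  also have "\<dots> = 0" using assms(2,3) m unfolding orthp_def by simp
  finally show ?thesis by (metis ip_self_eq0 eq_iff_diff_eq_0)
qed

lemma proj_exists: assumes sM: "subsp M" and cM: "closed M" shows "\<exists>y. orthp M x y"
proof -
  define D where "D = (\<lambda>m. norm (x - m)) ` M"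
  define d where "d = Inf D"
  have ne: "D \<noteq> {}" using subsp_0[OF sM] by (auto simp: D_def)
  have bb: "bdd_below D" unfolding D_def by (rule bdd_belowI[of _ 0]) auto
  have dle: "\<And>z. z \<in> M \<Longrightarrow> d \<le> norm (x - z)"
    unfolding d_def D_def by (rule cInf_lower) (use bb D_def in auto)
  have d0: "d \<ge> 0" unfolding d_def by (rule cInf_greatest[OF ne]) (auto simp: D_def)
  have "\<forall>n::nat. \<exists>m\<in>M. norm (x - m) < d + 1/(real n+1)"
  proof
    fix n :: nat
    have "Inf D < d + 1/(real n+1)" unfolding d_def by simp
    then obtain v where "v \<in> D" "v < d + 1/(real n+1)" using cInf_lessD[OF ne] by blast
    thus "\<exists>m\<in>M. norm (x - m) < d + 1/(real n+1)" by (auto simp: D_def)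
  qed
  then obtain m where mM: "\<And>n. m n \<in> M" and mlt: "\<And>n. norm (x - m n) < d + 1/(real n+1)"
    by metis
  have par: "(norm (m n - m k))\<^sup>2 \<le> (4*d+2) * (1/(real n+1) + 1/(real k+1))" for n k
  proof -
    define a where "a = x - m n"
    define b where "b = x - m k"
    define en where "en = 1/(real n+1)"
    define ek where "ek = 1/(real k+1)"
    have en: "0 \<le> en" "en \<le> 1" by (auto simp: en_def field_simps)
    have ek: "0 \<le> ek" "ek \<le> 1" by (auto simp: ek_def field_simps)
    have pl: "(norm (a + b))\<^sup>2 + (norm (a - b))\<^sup>2 = 2*(norm a)\<^sup>2 + 2*(norm b)\<^sup>2"
      using norm_add_sq[of a b] norm_diff_sq[of a b] by simp
    have "a + b = 2 *\<^sub>R (x - (1/2) *\<^sub>R (m n + m k))"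
      by (simp add: a_def b_def algebra_simps scaleR_2)
    hence "norm (a + b) = 2 * norm (x - (1/2) *\<^sub>R (m n + m k))" by simp
    moreover have "(1/2) *\<^sub>R (m n + m k) \<in> M"
      using sM mM by (intro subsp_scaleR subsp_add) auto
    ultimately have "norm (a + b) \<ge> 2*d" using dle by fastforce
    hence "(2*d)^2 \<le> (norm (a + b))\<^sup>2" by (rule power_mono) (use d0 in auto)
    hence s1: "(norm (a + b))\<^sup>2 \<ge> 4*d^2" by (simp add: power_mult_distrib)
    have na: "norm a < d + en" "norm b < d + ek" using mlt by (auto simp: a_def b_def en_def ek_def)
    have "(norm a)\<^sup>2 \<le> (d + en)\<^sup>2" using na(1) by (intro power_mono) auto
    moreover have "(norm b)\<^sup>2 \<le> (d + ek)\<^sup>2" using na(2) by (intro power_mono) auto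
    ultimately have "(norm (a - b))\<^sup>2 \<le> 2*(d+en)^2 + 2*(d+ek)^2 - 4*d^2" using pl s1 by linarith
    also have "\<dots> = 4*d*en + 2*en*en + 4*d*ek + 2*ek*ek" by (simp add: power2_eq_square algebra_simps)
    also have "\<dots> \<le> 4*d*en + 2*en + 4*d*ek + 2*ek"
    proof -
      have "en*en \<le> en" using en mult_left_le_one_le by blast
      moreover have "ek*ek \<le> ek" using ek mult_left_le_one_le by blast
      ultimately show ?thesis by linarith
    qed
    also have "\<dots> = (4*d+2)*(en+ek)" by (simp add: algebra_simps)
    finally show ?thesis by (simp add: a_def b_def en_def ek_def norm_minus_commute)
  qed
  have "Cauchy m"
  proof (rule metric_CauchyI)
    fix e :: real assume e: "e > 0"
    obtain N :: nat where N: "real N > (4*d+2)*2/e^2" using reals_Archimedean2 by blast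
    show "\<exists>N. \<forall>n\<ge>N. \<forall>k\<ge>N. dist (m n) (m k) < e"
    proof (intro exI allI impI)
      fix n k assume nN: "n \<ge> N" and kN: "k \<ge> N"
      have "1/(real n+1) \<le> 1/(real N+1)" "1/(real k+1) \<le> 1/(real N+1)"
        using nN kN by (auto simp: field_simps)
      hence "(4*d+2) * (1/(real n+1) + 1/(real k+1)) \<le> (4*d+2)*(2/(real N+1))"
        using d0 by (intro mult_left_mono) auto
      also have "\<dots> < e^2"
      proof -
        have "(4*d+2)*2/e^2 < real N + 1" using N by simp
        hence "(4*d+2)*2 < (real N + 1) * e^2" using e by (simp add: field_simps)
        thus ?thesis by (simp add: field_simps)
      qed
      finally have "(norm (m n - m k))\<^sup>2 < e^2" using par[of n k] by linarith
      hence "norm (m n - m k) < e" using e by (simp add: power_less_imp_less_base)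
      thus "dist (m n) (m k) < e" by (simp add: dist_norm)
    qed
  qed
  then obtain y where my: "m \<longlonglongrightarrow> y" using Cauchy_convergent_iff convergent_def by blast
  have yM: "y \<in> M" using cM mM my closed_sequentially by blast
  have lim1: "(\<lambda>n. norm (x - m n)) \<longlonglongrightarrow> norm (x - y)"
    by (intro tendsto_intros my)
  have lim2: "(\<lambda>n. d + inverse (real (Suc n))) \<longlonglongrightarrow> d"
    by (rule LIMSEQ_inverse_real_of_nat_add)
  have "norm (x - m n) \<le> d + inverse (real (Suc n))" for n
    using mlt[of n] by (simp add: inverse_eq_divide add.commute)
  hence ymin: "norm (x - y) \<le> d"
    using LIMSEQ_le[OF lim1 lim2] by blast
  have ortR: "Re (ip (x - y) z) = 0" if zM: "z \<in> M" for z
  proof (rule quad_aux)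
    fix t :: real
    have "y + t *\<^sub>R z \<in> M" using sM yM zM by (intro subsp_add subsp_scaleR) auto
    hence "norm (x - y) \<le> norm (x - y - t *\<^sub>R z)" using ymin dle by (smt (verit) diff_diff_eq)
    hence "(norm (x - y))\<^sup>2 \<le> (norm (x - y - t *\<^sub>R z))\<^sup>2" by (simp add: power_mono)
    also have "\<dots> = (norm (x - y))\<^sup>2 + t^2 * (norm z)\<^sup>2 - 2 * (t * Re (ip (x - y) z))"
      by (simp add: norm_diff_sq ip_scaleR_right power_mult_distrib)
    finally show "2 * t * Re (ip (x - y) z) \<le> t^2 * (norm z)\<^sup>2" by simp
  qed
  have "ip (x - y) z = 0" if zM: "z \<in> M" for z
  proof -
    have "sc \<i> z \<in> M" using sM zM by (rule subsp_sc)
    hence "Re (ip (x - y) (sc \<i> z)) = 0" by (rule ortR)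
    hence "Im (ip (x - y) z) = 0" by (simp add: ip_sc_right')
    thus ?thesis using ortR[OF zM] by (simp add: complex_eq_iff)
  qed
  thus ?thesis using yM unfolding orthp_def by blast
qed

lemma projn: assumes "subsp M" "closed M" shows "orthp M x (projn M x)"
  unfolding projn_def using proj_exists[OF assms] orthp_unique[OF assms(1)] by (metis theI)

lemma projn_eq: assumes "subsp M" "orthp M x y" shows "projn M x = y"
  unfolding projn_def using assms orthp_unique by blast

lemma projn_in: "subsp M \<Longrightarrow> closed M \<Longrightarrow> projn M x \<in> M"
  using projn orthp_def by blast
lemma projn_orth: "subsp M \<Longrightarrow> closed M \<Longrightarrow> z \<in> M \<Longrightarrow> ip (x - projn M x) z = 0"
  using projn orthp_def by blast

lemma projn_id: "subsp M \<Longrightarrow> m \<in> M \<Longrightarrow> projn M m = m"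
  by (rule projn_eq) (auto simp: orthp_def)

lemma projn_add: assumes "subsp M" "closed M" shows "projn M (p + q) = projn M p + projn M q"
proof (rule projn_eq[OF assms(1)])
  have "projn M p + projn M q \<in> M" using assms projn_in subsp_add by blast
  moreover have "ip ((p + q) - (projn M p + projn M q)) z = 0" if "z \<in> M" for z
  proof -
    have eq: "(p + q) - (projn M p + projn M q) = (p - projn M p) + (q - projn M q)" by simp
    show ?thesis using projn_orth[OF assms that, where x=p] projn_orth[OF assms that, where x=q]
      by (simp only: eq ip_add) simp
  qed
  ultimately show "orthp M (p + q) (projn M p + projn M q)" unfolding orthp_def by blast
qed

end


context cip begin

lemma projn_scaleR: assumes "subsp M" "closed M" shows "projn M (r *\<^sub>R p) = r *\<^sub>R projn M p"
proof (rule projn_eq[OF assms(1)])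
  have "r *\<^sub>R projn M p \<in> M" using assms projn_in subsp_scaleR by blast
  moreover have "ip (r *\<^sub>R p - r *\<^sub>R projn M p) z = 0" if "z \<in> M" for z
  proof -
    have eq: "r *\<^sub>R p - r *\<^sub>R projn M p = r *\<^sub>R (p - projn M p)" by (simp add: algebra_simps)
    show ?thesis using projn_orth[OF assms that, where x=p] by (simp only: eq ip_scaleR_left) simp
  qed
  ultimately show "orthp M (r *\<^sub>R p) (r *\<^sub>R projn M p)" unfolding orthp_def by blast
qed

lemma projn_minus: assumes "subsp M" "closed M" shows "projn M (- p) = - projn M p"
  using projn_scaleR[OF assms, of "-1" p] by simp

lemma projn_diff: assumes "subsp M" "closed M" shows "projn M (p - q) = projn M p - projn M q"
  using projn_add[OF assms, of p "-q"] projn_minus[OF assms, of q] by simp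

lemma projn_zero: assumes "subsp M" "closed M" shows "projn M 0 = 0"
  using projn_id[OF assms(1) subsp_0[OF assms(1)]] .

lemma pythag: assumes "subsp M" "closed M"
  shows "(norm x)\<^sup>2 = (norm (projn M x))\<^sup>2 + (norm (x - projn M x))\<^sup>2"
proof -
  have "ip (x - projn M x) (projn M x) = 0" using projn_orth[OF assms projn_in[OF assms]] .
  hence "Re (ip (projn M x) (x - projn M x)) = 0" by (subst ip_commute) simp
  moreover have "x = projn M x + (x - projn M x)" by simp
  ultimately show ?thesis using norm_add_sq[of "projn M x" "x - projn M x"] by simp
qed

lemma projn_norm: "subsp M \<Longrightarrow> closed M \<Longrightarrow> norm (projn M x) \<le> norm x"
  using pythag[of M x] by (smt (verit) norm_ge_zero power2_le_imp_le zero_le_power2)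
lemma projn_norm2: "subsp M \<Longrightarrow> closed M \<Longrightarrow> norm (x - projn M x) \<le> norm x"
  using pythag[of M x] by (smt (verit) norm_ge_zero power2_le_imp_le zero_le_power2)

lemma projn_selfadj: assumes "subsp M" "closed M" shows "ip (projn M p) q = ip p (projn M q)"
proof -
  have a: "ip (projn M p) (q - projn M q) = 0"
    using projn_orth[OF assms projn_in[OF assms], of q p] by (subst ip_commute) simp
  have b: "ip (p - projn M p) (projn M q) = 0" using projn_orth[OF assms projn_in[OF assms]] .
  have "ip (projn M p) q = ip (projn M p) (projn M q)" using a by (simp add: ip_diff_right)
  also have "\<dots> = ip p (projn M q)" using b by (simp add: ip_diff_left)
  finally show ?thesis .
qed

lemma subsp_orth: "subsp (orth M)"
  unfolding subsp_def orth_def by (auto simp: ip_add ip_sc)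

lemma projn_orth_eq: assumes "subsp M" "closed M" shows "projn (orth M) x = x - projn M x"
proof (rule projn_eq[OF subsp_orth])
  have "x - projn M x \<in> orth M" unfolding orth_def using projn_orth[OF assms] by blast
  moreover have "ip (x - (x - projn M x)) z = 0" if "z \<in> orth M" for z
  proof -
    have "ip z (projn M x) = 0" using that projn_in[OF assms] unfolding orth_def by blast
    thus ?thesis by (subst ip_commute) simp
  qed
  ultimately show "orthp (orth M) x (x - projn M x)" unfolding orthp_def by blast
qed

lemma projn_lipschitz: "subsp M \<Longrightarrow> closed M \<Longrightarrow> norm (projn M p - projn M q) \<le> norm (p - q)"
  using projn_norm[of M "p - q"] projn_diff[of M p q] by simp

lemma projn_tendsto: assumes "subsp M" "closed M" "s \<longlonglongrightarrow> l"
  shows "(\<lambda>n. projn M (s n)) \<longlonglongrightarrow> projn M l"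
proof -
  have z: "(\<lambda>n. norm (s n - l)) \<longlonglongrightarrow> 0" using assms(3) by (simp add: LIM_zero_iff tendsto_norm_zero)
  have le: "norm (projn M (s n) - projn M l) \<le> norm (s n - l)" for n
    using projn_lipschitz[OF assms(1,2)] .
  show ?thesis
    apply (rule LIM_zero_cancel)
    apply (rule Lim_null_comparison[OF _ z])
    using le by (simp add: always_eventually)
qed

end

section \<open>Sequential compactness\<close>

definition seqrc :: "'c::metric_space set \<Rightarrow> bool" where
  "seqrc E \<longleftrightarrow> (\<forall>s::nat\<Rightarrow>'c. (\<forall>n. s n \<in> E) \<longrightarrow> (\<exists>r l. strict_mono r \<and> (s \<circ> r) \<longlonglongrightarrow> l))"

lemma compact_closure_seqrc: "compact (closure (E::'c::metric_space set)) \<longleftrightarrow> seqrc E"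
proof
  assume c: "compact (closure E)"
  show "seqrc E" unfolding seqrc_def
  proof (intro allI impI)
    fix s :: "nat \<Rightarrow> 'c" assume "\<forall>n. s n \<in> E"
    hence "\<forall>n. s n \<in> closure E" using closure_subset by blast
    thus "\<exists>r l. strict_mono r \<and> (s \<circ> r) \<longlonglongrightarrow> l"
      using compact_imp_seq_compact[OF c] unfolding seq_compact_def by blast
  qed
next
  assume sr: "seqrc E"
  have "seq_compact (closure E)" unfolding seq_compact_def
  proof (intro allI impI)
    fix s :: "nat \<Rightarrow> 'c" assume sE: "\<forall>n. s n \<in> closure E"
    have "\<forall>n. \<exists>t\<in>E. dist t (s n) < inverse (real (Suc n))"
      using sE closure_approachable by (metis of_nat_Suc inverse_positive_iff_positive of_nat_0_less_iff zero_less_Suc)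
    then obtain t where tE: "\<And>n. t n \<in> E" and td: "\<And>n. dist (t n) (s n) < inverse (real (Suc n))" by metis
    obtain r l where r: "strict_mono r" and tl: "(t \<circ> r) \<longlonglongrightarrow> l" using sr tE unfolding seqrc_def by blast
    have "(\<lambda>n. dist (t (r n)) (s (r n))) \<longlonglongrightarrow> 0"
    proof (rule Lim_null_comparison[OF _ LIMSEQ_inverse_real_of_nat])
      show "\<forall>\<^sub>F n in sequentially. norm (dist (t (r n)) (s (r n))) \<le> inverse (real (Suc n))"
      proof (intro always_eventually allI)
        fix n
        have i: "inverse (real (Suc (r n))) \<le> inverse (real (Suc n))"
          using seq_suble[OF r, of n] by (intro le_imp_inverse_le) auto
        have "dist (t (r n)) (s (r n)) < inverse (real (Suc n))" using td[of "r n"] i by linarith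
        thus "norm (dist (t (r n)) (s (r n))) \<le> inverse (real (Suc n))" by simp
      qed
    qed
    moreover have "(\<lambda>n. dist (t (r n)) l) \<longlonglongrightarrow> 0" using tl tendsto_dist_iff[of "t \<circ> r" l] by (simp add: o_def)
    ultimately have z: "(\<lambda>n. dist (t (r n)) (s (r n)) + dist (t (r n)) l) \<longlonglongrightarrow> 0"
      using tendsto_add_zero by blast
    have "(\<lambda>n. dist (s (r n)) l) \<longlonglongrightarrow> 0"
    proof (rule Lim_null_comparison[OF _ z], intro always_eventually allI)
      fix n show "norm (dist (s (r n)) l) \<le> dist (t (r n)) (s (r n)) + dist (t (r n)) l"
        using dist_triangle[of "s (r n)" l "t (r n)"] by (simp add: dist_commute)
    qed
    hence sl: "(s \<circ> r) \<longlonglongrightarrow> l" using tendsto_dist_iff[of "s \<circ> r" l] by (simp add: o_def)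
    have "l \<in> closure E" using closed_sequentially[of "closure E" "s \<circ> r" l] sE sl by simp
    thus "\<exists>l\<in>closure E. \<exists>r. strict_mono r \<and> (s \<circ> r) \<longlonglongrightarrow> l" using r sl by blast
  qed
  thus "compact (closure E)" using compact_eq_seq_compact_metric by blast
qed


definition copseq :: "('c::real_normed_vector \<Rightarrow> 'd::real_normed_vector) \<Rightarrow> bool" where
  "copseq K \<longleftrightarrow> (\<forall>(s::nat\<Rightarrow>'c) c. (\<forall>n. norm (s n) \<le> c) \<longrightarrow> (\<exists>r l. strict_mono r \<and> (\<lambda>n. K (s (r n))) \<longlonglongrightarrow> l))"

lemma compact_operator_iff: "compact_operator K \<longleftrightarrow> copseq K"
proof
  assume co: "compact_operator K"
  show "copseq K" unfolding copseq_def
  proof (intro allI impI)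
    fix s :: "nat \<Rightarrow> 'a" and c assume sc: "\<forall>n. norm (s n) \<le> c"
    have "bounded (range s)" using sc by (auto simp: bounded_iff)
    hence "seqrc (K ` range s)" using co compact_closure_seqrc unfolding compact_operator_def by blast
    moreover have "\<forall>n. (K \<circ> s) n \<in> K ` range s" by simp
    ultimately obtain r l where "strict_mono r" "((K \<circ> s) \<circ> r) \<longlonglongrightarrow> l" unfolding seqrc_def by blast
    thus "\<exists>r l. strict_mono r \<and> (\<lambda>n. K (s (r n))) \<longlonglongrightarrow> l" by (auto simp: o_def)
  qed
next
  assume cs: "copseq K"
  show "compact_operator K" unfolding compact_operator_def
  proof (intro allI impI)
    fix B :: "'a set" assume "bounded B"
    then obtain c where c: "\<forall>x\<in>B. norm x \<le> c" by (auto simp: bounded_iff)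
    have "seqrc (K ` B)" unfolding seqrc_def
    proof (intro allI impI)
      fix t :: "nat \<Rightarrow> 'b" assume "\<forall>n. t n \<in> K ` B"
      hence "\<forall>n. \<exists>x. x \<in> B \<and> t n = K x" by blast
      then obtain s where "\<forall>n. s n \<in> B \<and> t n = K (s n)" by (rule choice[THEN exE]) blast
      hence sB: "\<And>n. s n \<in> B" and ts: "\<And>n. t n = K (s n)" by auto
      have "\<forall>n. norm (s n) \<le> c" using sB c by blast
      then obtain r l where "strict_mono r" "(\<lambda>n. K (s (r n))) \<longlonglongrightarrow> l" using cs unfolding copseq_def by blast
      thus "\<exists>r l. strict_mono r \<and> (t \<circ> r) \<longlonglongrightarrow> l" by (auto simp: o_def ts)
    qed
    thus "compact (closure (K ` B))" using compact_closure_seqrc by blast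
  qed
qed

definition relcseq :: "('c::real_normed_vector \<Rightarrow> 'c) \<Rightarrow> ('c \<Rightarrow> 'c) \<Rightarrow> 'c set \<Rightarrow> bool" where
  "relcseq U V D \<longleftrightarrow> (\<forall>(s::nat\<Rightarrow>'c) c. (\<forall>n. s n \<in> D \<and> norm (s n) + norm (V (s n)) \<le> c)
      \<longrightarrow> (\<exists>r l. strict_mono r \<and> (\<lambda>n. U (s (r n))) \<longlonglongrightarrow> l))"

lemma rel_compact_iff: "rel_compact U V D \<longleftrightarrow> relcseq U V D"
proof
  assume co: "rel_compact U V D"
  show "relcseq U V D" unfolding relcseq_def
  proof (intro allI impI)
    fix s :: "nat \<Rightarrow> 'a" and c assume sc: "\<forall>n. s n \<in> D \<and> norm (s n) + norm (V (s n)) \<le> c"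
    have "range s \<subseteq> D" "\<forall>x\<in>range s. norm x + norm (V x) \<le> c" using sc by auto
    hence "seqrc (U ` range s)" using co compact_closure_seqrc unfolding rel_compact_def by blast
    moreover have "\<forall>n. (U \<circ> s) n \<in> U ` range s" by simp
    ultimately obtain r l where "strict_mono r" "((U \<circ> s) \<circ> r) \<longlonglongrightarrow> l" unfolding seqrc_def by blast
    thus "\<exists>r l. strict_mono r \<and> (\<lambda>n. U (s (r n))) \<longlonglongrightarrow> l" by (auto simp: o_def)
  qed
next
  assume cs: "relcseq U V D"
  show "rel_compact U V D" unfolding rel_compact_def
  proof (intro allI impI)
    fix B :: "'a set" assume BD: "B \<subseteq> D" and "\<exists>K. \<forall>x\<in>B. norm x + norm (V x) \<le> K"
    then obtain c where c: "\<forall>x\<in>B. norm x + norm (V x) \<le> c" by blast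
    have "seqrc (U ` B)" unfolding seqrc_def
    proof (intro allI impI)
      fix t :: "nat \<Rightarrow> 'a" assume "\<forall>n. t n \<in> U ` B"
      hence "\<forall>n. \<exists>x. x \<in> B \<and> t n = U x" by blast
      then obtain s where "\<forall>n. s n \<in> B \<and> t n = U (s n)" by (rule choice[THEN exE]) blast
      hence sB: "\<And>n. s n \<in> B" and ts: "\<And>n. t n = U (s n)" by auto
      have "\<forall>n. s n \<in> D \<and> norm (s n) + norm (V (s n)) \<le> c" using sB c BD by blast
      then obtain r l where "strict_mono r" "(\<lambda>n. U (s (r n))) \<longlonglongrightarrow> l" using cs unfolding relcseq_def by blast
      thus "\<exists>r l. strict_mono r \<and> (t \<circ> r) \<longlonglongrightarrow> l" by (auto simp: o_def ts)
    qed
    thus "compact (closure (U ` B))" using compact_closure_seqrc by blast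
  qed
qed

lemma copseq_diff: assumes F: "copseq F" and G: "copseq G" shows "copseq (\<lambda>p. F p - G p)"
  unfolding copseq_def
proof (intro allI impI)
  fix s :: "nat \<Rightarrow> 'a" and c assume sc: "\<forall>n. norm (s n) \<le> c"
  obtain r1 l1 where r1: "strict_mono r1" and l1: "(\<lambda>n. F (s (r1 n))) \<longlonglongrightarrow> l1"
    using F sc unfolding copseq_def by blast
  have "\<forall>n. norm ((s \<circ> r1) n) \<le> c" using sc by simp
  then obtain r2 l2 where r2: "strict_mono r2" and l2: "(\<lambda>n. G ((s \<circ> r1) (r2 n))) \<longlonglongrightarrow> l2"
    using G unfolding copseq_def by blast
  have "(\<lambda>n. F (s (r1 (r2 n)))) \<longlonglongrightarrow> l1" using LIMSEQ_subseq_LIMSEQ[OF l1 r2] by (simp add: o_def)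
  hence "(\<lambda>n. F (s (r1 (r2 n))) - G (s (r1 (r2 n)))) \<longlonglongrightarrow> l1 - l2" using l2 by (intro tendsto_diff) auto
  moreover have "strict_mono (r1 \<circ> r2)" using r1 r2 by (rule strict_mono_o)
  ultimately show "\<exists>r l. strict_mono r \<and> (\<lambda>n. F (s (r n)) - G (s (r n))) \<longlonglongrightarrow> l" by (auto simp: o_def)
qed

lemma cip_X: "cip (cinner :: 'a::chilbert_space \<Rightarrow> 'a \<Rightarrow> complex) scaleC"
  by unfold_locales (simp_all add: cinner_add_left cinner_scaleC_left cinner_commute[symmetric] norm_eq_sqrt_cinner
      cinner_self_real scaleC_add_right scaleR_scaleC)

lemma cip_P: "cip (pinner :: ('a::chilbert_space \<times> 'a) \<Rightarrow> ('a \<times> 'a) \<Rightarrow> complex) (\<lambda>c p. (scaleC c (fst p), scaleC c (snd p)))"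
proof unfold_locales
  fix x y z :: "'a \<times> 'a" and c :: complex and r :: real
  show "pinner (x + y) z = pinner x z + pinner y z" by (simp add: pinner_def cinner_add_left)
  show "pinner (scaleC c (fst x), scaleC c (snd x)) y = c * pinner x y" by (simp add: pinner_def cinner_scaleC_left algebra_simps)
  show "pinner x y = cnj (pinner y x)" by (simp add: pinner_def cinner_commute[of "fst x"] cinner_commute[of "snd x"])
  show "Im (pinner x x) = 0" by (simp add: pinner_def cinner_self_real)
  show "(scaleC c (fst (x + y)), scaleC c (snd (x + y))) = (scaleC c (fst x), scaleC c (snd x)) + (scaleC c (fst y), scaleC c (snd y))"
    by (simp add: scaleC_add_right)
  show "(scaleC (complex_of_real r) (fst x), scaleC (complex_of_real r) (snd x)) = r *\<^sub>R x"
    by (simp add: scaleR_scaleC scaleR_prod_def)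
  have "Re (cinner (fst x) (fst x)) = (norm (fst x))\<^sup>2"
    using norm_eq_sqrt_cinner[of "fst x"] cinner_self_nonneg[of "fst x"] by simp
  moreover have "Re (cinner (snd x) (snd x)) = (norm (snd x))\<^sup>2"
    using norm_eq_sqrt_cinner[of "snd x"] cinner_self_nonneg[of "snd x"] by simp
  ultimately show "norm x = sqrt (Re (pinner x x))" by (simp add: pinner_def norm_prod_def)
qed


interpretation X: cip "cinner :: 'a::chilbert_space \<Rightarrow> 'a \<Rightarrow> complex" scaleC by (rule cip_X)
interpretation P: cip "pinner :: ('a::chilbert_space \<times> 'a) \<Rightarrow> ('a \<times> 'a) \<Rightarrow> complex" "\<lambda>c p. (scaleC c (fst p), scaleC c (snd p))"
  by (rule cip_P)

lemma scaleC_minus1: "scaleC (-1) (v::'a::complex_vector) = - v"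
  using scaleR_scaleC[of "-1" v] by simp

lemma scaleC_zero_right: "scaleC c (0::'a::complex_vector) = 0"
  using scaleC_add_right[of c 0 0] by simp

lemma rs_zero: "rel_subspace R \<Longrightarrow> (0,0) \<in> R" by (simp add: rel_subspace_def)
lemma rs_add: "rel_subspace R \<Longrightarrow> (a,b) \<in> R \<Longrightarrow> (c,d) \<in> R \<Longrightarrow> (a+c, b+d) \<in> R"
  unfolding rel_subspace_def by fastforce
lemma rs_sc: "rel_subspace R \<Longrightarrow> (a,b) \<in> R \<Longrightarrow> (scaleC k a, scaleC k b) \<in> R"
  unfolding rel_subspace_def by fastforce
lemma rs_minus: "rel_subspace R \<Longrightarrow> (a,b) \<in> R \<Longrightarrow> (-a, -b) \<in> R"
  using rs_sc[of R a b "-1"] by (simp add: scaleC_minus1)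
lemma rs_diff: "rel_subspace R \<Longrightarrow> (a,b) \<in> R \<Longrightarrow> (c,d) \<in> R \<Longrightarrow> (a-c, b-d) \<in> R"
  using rs_add[of R a b "-c" "-d"] rs_minus[of R c d] by simp

lemma rs_P: "rel_subspace (R::('a::chilbert_space \<times> 'a) set) \<Longrightarrow> P.subsp R"
  unfolding P.subsp_def by (auto simp: rs_zero rs_add rs_sc zero_prod_def)

lemma rs_app: "rel_subspace (R::('a::chilbert_space \<times> 'a) set) \<Longrightarrow> X.subsp (relapp R 0)"
  unfolding X.subsp_def relapp_def using rs_zero[of R] rs_add[of R 0 _ 0] rs_sc[of R 0 _] 
  by (auto simp: scaleC_zero_right)

lemma closed_app: "closed (R::('a::real_normed_vector \<times> 'a) set) \<Longrightarrow> closed (relapp R 0)"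
proof -
  assume "closed R"
  moreover have "relapp R 0 = (\<lambda>x. (0::'a,x)) -` R" by (auto simp: relapp_def)
  ultimately show ?thesis by (auto intro!: closed_vimage continuous_intros)
qed

lemma closed_adj: "closed (adj (T::('a::chilbert_space \<times> 'a) set))"
proof -
  have "adj T = {p. \<forall>q\<in>T. cinner (snd p) (fst q) = cinner (fst p) (snd q)}"
    unfolding adj_def by (auto simp: case_prod_beta)
  hence "adj T = (\<Inter>q\<in>T. {p. cinner (snd p) (fst q) = cinner (fst p) (snd q)})"
    by blast
  moreover have "closed {p. cinner (snd p) (fst q) = cinner (fst p) (snd (q::'a\<times>'a))}" for q
    by (intro closed_Collect_eq bounded_bilinear.continuous_on[OF X.bb] continuous_intros)
  ultimately show ?thesis by auto
qed

lemma sa_closed: "self_adjoint (S::('a::chilbert_space \<times> 'a) set) \<Longrightarrow> closed S"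
  unfolding self_adjoint_def using closed_adj[of S] by simp

lemma op_fun_eq:
  assumes R: "rel_subspace (R::('a::chilbert_space \<times> 'a) set)" and xg: "(x,g) \<in> R"
    and o: "\<forall>h\<in>relapp R 0. cinner g h = 0"
  shows "op_fun R x = g"
proof -
  have in1: "(x,g) \<in> op_part R"
    using xg o unfolding op_part_def mul_part_def relapp_def pinner_def by auto
  have uq: "g' = g" if "(x,g') \<in> op_part R" for g'
  proof -
    have g'R: "(x,g') \<in> R" and o': "\<forall>q\<in>mul_part R. pinner (x,g') q = 0"
      using that unfolding op_part_def by auto
    have "(x - x, g' - g) \<in> R" using rs_diff[OF R g'R xg] .
    hence d: "g' - g \<in> relapp R 0" "(0, g' - g) \<in> mul_part R" by (auto simp: relapp_def mul_part_def)
    have "cinner g' (g' - g) = 0" using o' d(2) by (auto simp: pinner_def)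
    moreover have "cinner g (g' - g) = 0" using o d(1) by blast
    ultimately have "cinner (g' - g) (g' - g) = 0" by (simp add: X.ip_diff_left)
    thus ?thesis using X.ip_self_eq0 by fastforce
  qed
  show ?thesis unfolding op_fun_def using in1 uq by blast
qed

lemma op_fun_char:
  assumes R: "rel_subspace (R::('a::chilbert_space \<times> 'a) set)" and cR: "closed R" and xf: "(x,f) \<in> R"
  shows "op_fun R x = f - X.projn (relapp R 0) f" "(x, f - X.projn (relapp R 0) f) \<in> R"
proof -
  have sM: "X.subsp (relapp R 0)" and cM: "closed (relapp R 0)" using rs_app[OF R] closed_app[OF cR] .
  have "(0, X.projn (relapp R 0) f) \<in> R" using X.projn_in[OF sM cM] by (auto simp: relapp_def)
  from rs_diff[OF R xf this] show xR: "(x, f - X.projn (relapp R 0) f) \<in> R" by simp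
  show "op_fun R x = f - X.projn (relapp R 0) f"
    by (rule op_fun_eq[OF R xR]) (use X.projn_orth[OF sM cM] in blast)
qed

lemma op_fun_in:
  assumes R: "rel_subspace (R::('a::chilbert_space \<times> 'a) set)" and cR: "closed R" and x: "x \<in> Dom R"
  shows "(x, op_fun R x) \<in> R" "\<forall>h\<in>relapp R 0. cinner (op_fun R x) h = 0"
proof -
  obtain f where xf: "(x,f) \<in> R" using x by (auto simp: Dom_def)
  have sM: "X.subsp (relapp R 0)" and cM: "closed (relapp R 0)" using rs_app[OF R] closed_app[OF cR] .
  show "(x, op_fun R x) \<in> R" using op_fun_char[OF R cR xf] by simp
  show "\<forall>h\<in>relapp R 0. cinner (op_fun R x) h = 0" using op_fun_char[OF R cR xf] X.projn_orth[OF sM cM] by simp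
qed

lemma op_fun_norm:
  assumes R: "rel_subspace (R::('a::chilbert_space \<times> 'a) set)" and cR: "closed R" and xf: "(x,f) \<in> R"
  shows "norm (op_fun R x) \<le> norm f"
  using op_fun_char(1)[OF R cR xf] X.projn_norm2[OF rs_app[OF R] closed_app[OF cR]] by simp

lemma op_fun_diff:
  assumes R: "rel_subspace (R::('a::chilbert_space \<times> 'a) set)" and cR: "closed R" and x: "x \<in> Dom R" and y: "y \<in> Dom R"
  shows "op_fun R (x - y) = op_fun R x - op_fun R y"
proof (rule op_fun_eq[OF R])
  show "(x - y, op_fun R x - op_fun R y) \<in> R" using rs_diff[OF R op_fun_in(1)[OF R cR x] op_fun_in(1)[OF R cR y]] .
  show "\<forall>h\<in>relapp R 0. cinner (op_fun R x - op_fun R y) h = 0"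
    using op_fun_in(2)[OF R cR x] op_fun_in(2)[OF R cR y] by (simp add: X.ip_diff_left)
qed

lemma op_fun_sc:
  assumes R: "rel_subspace (R::('a::chilbert_space \<times> 'a) set)" and cR: "closed R" and x: "x \<in> Dom R"
  shows "op_fun R (scaleC c x) = scaleC c (op_fun R x)"
proof (rule op_fun_eq[OF R])
  show "(scaleC c x, scaleC c (op_fun R x)) \<in> R" using rs_sc[OF R op_fun_in(1)[OF R cR x]] .
  show "\<forall>h\<in>relapp R 0. cinner (scaleC c (op_fun R x)) h = 0"
    using op_fun_in(2)[OF R cR x] by (simp add: cinner_scaleC_left)
qed

lemma dom_diff: "rel_subspace R \<Longrightarrow> x \<in> Dom R \<Longrightarrow> y \<in> Dom R \<Longrightarrow> x - y \<in> Dom R"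
  unfolding Dom_def using rs_diff by blast
lemma dom_sc: "rel_subspace R \<Longrightarrow> x \<in> Dom R \<Longrightarrow> scaleC c x \<in> Dom R"
  unfolding Dom_def using rs_sc by blast
lemma dom_zero: "rel_subspace R \<Longrightarrow> 0 \<in> Dom R"
  unfolding Dom_def using rs_zero by blast

lemma proj_eq: "proj N x = X.projn N x"
  by (simp add: proj_def X.projn_def X.orthp_def)
lemma ortho_eq: "ortho N = X.orth N"
  by (simp add: ortho_def X.orth_def)
lemma proj2_eq: "proj2 N x = P.projn N x"
  by (simp add: proj2_def P.projn_def P.orthp_def)


context cip begin
lemma adj_copseq:
  assumes C: "copseq C" and adj: "\<And>p q. ip (C p) q = ip p (E q)"
    and Cd: "\<And>p q. C (p - q) = C p - C q" and Ed: "\<And>p q. E (p - q) = E p - E q"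
    and En: "\<And>p. norm (E p) \<le> norm p"
  shows "copseq E"
  unfolding copseq_def
proof (intro allI impI)
  fix s :: "nat \<Rightarrow> 'b" and c assume sc: "\<forall>n. norm (s n) \<le> c"
  have c0: "c \<ge> 0" using sc norm_ge_zero order_trans by blast
  have "\<forall>n. norm ((E \<circ> s) n) \<le> c" using sc En order_trans by (simp add: o_def) blast
  then obtain r l where r: "strict_mono r" and l: "(\<lambda>n. C ((E \<circ> s) (r n))) \<longlonglongrightarrow> l"
    using C unfolding copseq_def by blast
  have Ca: "Cauchy (\<lambda>n. C (E (s (r n))))" using LIMSEQ_imp_Cauchy[OF l] by (simp add: o_def)
  have "Cauchy (\<lambda>n. E (s (r n)))"
  proof (rule metric_CauchyI)
    fix e :: real assume e: "e > 0"
    define d where "d = e^2 / (2*c+1)"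
    have d: "d > 0" using e c0 by (simp add: d_def)
    obtain N where N: "\<forall>m\<ge>N. \<forall>n\<ge>N. dist (C (E (s (r m)))) (C (E (s (r n)))) < d"
      using metric_CauchyD[OF Ca d] by blast
    show "\<exists>N. \<forall>m\<ge>N. \<forall>n\<ge>N. dist (E (s (r m))) (E (s (r n))) < e"
    proof (intro exI allI impI)
      fix m n assume m: "m \<ge> N" and n: "n \<ge> N"
      define u where "u = s (r m) - s (r n)"
      have "norm (s (r m)) \<le> c" "norm (s (r n)) \<le> c" using sc by auto
      hence nu: "norm u \<le> 2*c" using norm_triangle_ineq4[of "s (r m)" "s (r n)"] unfolding u_def by linarith
      have Eu: "E u = E (s (r m)) - E (s (r n))" by (simp add: u_def Ed)
      have CEu: "C (E u) = C (E (s (r m))) - C (E (s (r n)))" by (simp add: Eu Cd)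
      have "(norm (E u))\<^sup>2 = Re (ip (E u) (E u))" by (simp add: ip_self_Re)
      also have "\<dots> = Re (ip (C (E u)) u)" by (simp add: adj)
      also have "\<dots> \<le> cmod (ip (C (E u)) u)" by (rule complex_Re_le_cmod)
      also have "\<dots> \<le> norm (C (E u)) * norm u" by (rule CS)
      also have "\<dots> \<le> d * (2*c)"
      proof (rule mult_mono)
        show "norm (C (E u)) \<le> d" using N m n by (simp add: CEu dist_norm less_imp_le)
      qed (use nu d in auto)
      also have "\<dots> < e^2" using e c0 by (simp add: d_def field_simps)
      finally have "norm (E u) < e" using e by (simp add: power_less_imp_less_base)
      thus "dist (E (s (r m))) (E (s (r n))) < e" by (simp add: dist_norm Eu)
    qed
  qed
  then obtain l' where "(\<lambda>n. E (s (r n))) \<longlonglongrightarrow> l'" using Cauchy_convergent_iff convergent_def by blast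
  thus "\<exists>r l. strict_mono r \<and> (\<lambda>n. E (s (r n))) \<longlonglongrightarrow> l" using r by blast
qed
end

lemma copseq_bounded:
  fixes V :: "'c::real_normed_vector \<Rightarrow> 'd::real_normed_vector"
  assumes C: "copseq V" and lin: "\<And>r u. V (r *\<^sub>R u) = r *\<^sub>R V u"
  shows "\<exists>K. \<forall>u. norm (V u) \<le> K * norm u"
proof (rule ccontr)
  assume "\<not> ?thesis"
  hence "\<forall>n::nat. \<exists>u. norm (V u) > real n * norm u" by (metis not_le)
  then obtain u where u: "\<And>n. norm (V (u n)) > real n * norm (u n)" by metis
  have V0: "V 0 = 0" using lin[of 0 0] by simp
  have un: "u n \<noteq> 0" for n using u[of n] V0 by (metis norm_zero mult_zero_right less_irrefl)
  define z where "z n = inverse (norm (u n)) *\<^sub>R u n" for n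
  have nz: "norm (z n) \<le> 1" for n using un[of n] by (simp add: z_def)
  have Vz: "norm (V (z n)) > real n" for n
  proof -
    have "norm (V (z n)) = norm (V (u n)) / norm (u n)" using un[of n] by (simp add: z_def lin divide_inverse_commute)
    hence "real n * norm (u n) < norm (V (z n)) * norm (u n)" using u[of n] un[of n] by simp
    thus ?thesis using un[of n] by (simp add: mult_less_cancel_right_pos)
  qed
  obtain r l where r: "strict_mono r" and l: "(\<lambda>n. V (z (r n))) \<longlonglongrightarrow> l"
    using C nz unfolding copseq_def by blast
  have "bounded (range (\<lambda>n. V (z (r n))))" using convergent_imp_bounded[OF l] .
  then obtain B where B: "\<And>n. norm (V (z (r n))) \<le> B" by (auto simp: bounded_iff)
  obtain n :: nat where n: "real n > B" using reals_Archimedean2 by blast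
  have "real n \<le> real (r n)" using seq_suble[OF r, of n] by simp
  hence "norm (V (z (r n))) > B" using Vz[of "r n"] n by linarith
  thus False using B[of n] by linarith
qed


locale ctx =
  fixes T S A :: "('a::chilbert_space \<times> 'a) set"
  assumes T_closed: "closed T" and T_herm: "hermitian T" and A_closed: "closed A" and A_herm: "hermitian A"
    and S_sa: "self_adjoint S" and dom_eq: "Dom T = Dom S" and dom_sub: "Dom S \<subseteq> Dom A"
    and T_sum: "T = relsum S A"
begin

definition M where "M = relapp S 0"
definition PM where "PM = X.projn M"
definition B where "B x = proj (ortho (relapp S 0)) (op_fun A x)"

lemma rsS: "rel_subspace S" using S_sa by (simp add: self_adjoint_def)
lemma rsT: "rel_subspace T" using T_herm by (simp add: hermitian_def)
lemma rsA: "rel_subspace A" using A_herm by (simp add: hermitian_def)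
lemma cS: "closed S" using sa_closed[OF S_sa] .
lemma sM: "X.subsp M" unfolding M_def using rs_app[OF rsS] .
lemma cM: "closed M" unfolding M_def using closed_app[OF cS] .
lemma PM_in: "PM y \<in> M" unfolding PM_def using X.projn_in[OF sM cM] .
lemma PM_orth: "z \<in> M \<Longrightarrow> cinner (y - PM y) z = 0" unfolding PM_def using X.projn_orth[OF sM cM] .
lemma PM_diff: "PM (y - z) = PM y - PM z" unfolding PM_def using X.projn_diff[OF sM cM] .
lemma PM_scaleR: "PM (r *\<^sub>R y) = r *\<^sub>R PM y" unfolding PM_def using X.projn_scaleR[OF sM cM] .
lemma PM_id: "m \<in> M \<Longrightarrow> PM m = m" unfolding PM_def using X.projn_id[OF sM] .

lemma B_eq: "B x = op_fun A x - PM (op_fun A x)"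
  unfolding B_def PM_def M_def[symmetric] proj_eq ortho_eq using X.projn_orth_eq[OF sM cM] .

lemma M_S: "m \<in> M \<Longrightarrow> (0, m) \<in> S" by (simp add: M_def relapp_def)

lemma A_in: "x \<in> Dom S \<Longrightarrow> (x, op_fun A x) \<in> A"
  using op_fun_in(1)[OF rsA A_closed] dom_sub by blast

lemma K1: assumes xf: "(x,f) \<in> S" shows "(x, f + B x) \<in> T"
proof -
  have x: "x \<in> Dom S" using xf by (auto simp: Dom_def)
  have "(x - 0, f - PM (op_fun A x)) \<in> S" using rs_diff[OF rsS xf M_S[OF PM_in]] .
  hence "(x, (f - PM (op_fun A x)) + op_fun A x) \<in> relsum S A" using A_in[OF x] unfolding relsum_def by auto
  thus ?thesis by (simp add: T_sum B_eq algebra_simps)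
qed

lemma A0M: assumes "a \<in> relapp A 0" shows "a \<in> M"
proof -
  have a: "(0, a) \<in> A" using assms by (simp add: relapp_def)
  have "(0, 0 + a) \<in> relsum S A" using rs_zero[OF rsS] a unfolding relsum_def by blast
  hence "(0, a) \<in> T" by (simp add: T_sum)
  hence "(0, a) \<in> adj T" using T_herm by (auto simp: hermitian_def)
  hence o: "\<forall>(x,f)\<in>T. cinner a x = 0" by (auto simp: adj_def)
  have "\<forall>(x,f)\<in>S. cinner a x = cinner 0 f"
  proof (intro ballI, clarify)
    fix x f assume "(x,f) \<in> S"
    hence "x \<in> Dom T" using dom_eq by (auto simp: Dom_def)
    then obtain g where "(x,g) \<in> T" by (auto simp: Dom_def)
    thus "cinner a x = cinner 0 f" using o by auto
  qed
  hence "(0, a) \<in> adj S" by (auto simp: adj_def)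
  hence "(0, a) \<in> S" using S_sa by (simp add: self_adjoint_def)
  thus ?thesis by (simp add: M_def relapp_def)
qed

lemma K2: assumes xf: "(x,f) \<in> T" shows "x \<in> Dom S" "(x, f - B x) \<in> S"
proof -
  obtain g a where g: "(x,g) \<in> S" and a: "(x,a) \<in> A" and f: "f = g + a"
    using xf unfolding T_sum relsum_def by blast
  show x: "x \<in> Dom S" using g by (auto simp: Dom_def)
  have "(x - x, a - op_fun A x) \<in> A" using rs_diff[OF rsA a A_in[OF x]] .
  hence "a - op_fun A x \<in> M" using A0M by (simp add: relapp_def)
  hence "(a - op_fun A x) + PM (op_fun A x) \<in> M" using X.subsp_add[OF sM _ PM_in] by blast
  hence "(x + 0, g + ((a - op_fun A x) + PM (op_fun A x))) \<in> S" using rs_add[OF rsS g M_S] by blast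
  thus "(x, f - B x) \<in> S" by (simp add: f B_eq algebra_simps)
qed

lemma TM: "relapp T 0 = M"
proof
  show "relapp T 0 \<subseteq> M"
  proof
    fix m assume "m \<in> relapp T 0"
    hence "(0, m) \<in> T" by (simp add: relapp_def)
    hence "(0, m - B 0) \<in> S" using K2 by blast
    moreover have "op_fun A 0 = 0" by (rule op_fun_eq[OF rsA rs_zero[OF rsA]]) simp
    ultimately show "m \<in> M" using PM_id[OF X.subsp_0[OF sM]] by (simp add: B_eq M_def relapp_def)
  qed
  show "M \<subseteq> relapp T 0"
  proof
    fix m assume "m \<in> M"
    hence "(0, m + 0) \<in> relsum S A" using M_S rs_zero[OF rsA] unfolding relsum_def by blast
    thus "m \<in> relapp T 0" by (simp add: T_sum relapp_def)
  qed
qed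

lemma B_diff: "x \<in> Dom S \<Longrightarrow> y \<in> Dom S \<Longrightarrow> B (x - y) = B x - B y"
proof -
  assume "x \<in> Dom S" "y \<in> Dom S"
  hence "op_fun A (x - y) = op_fun A x - op_fun A y" using op_fun_diff[OF rsA A_closed, of x y] dom_sub by blast
  thus ?thesis by (simp add: B_eq PM_diff)
qed

lemma B_scaleR: "x \<in> Dom S \<Longrightarrow> B (r *\<^sub>R x) = r *\<^sub>R B x"
  using op_fun_sc[OF rsA A_closed, of x "complex_of_real r"] dom_sub
  by (auto simp: B_eq PM_scaleR scaleR_scaleC[symmetric] algebra_simps)

lemma B_zero: "B 0 = 0"
  using B_diff[of 0 0] dom_zero[OF rsS] by simp

lemma PM_B: "PM (B x) = 0"
  using PM_diff[of "op_fun A x" "PM (op_fun A x)"] PM_id[OF PM_in] by (simp add: B_eq)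

lemma Ts_char: "(y,g) \<in> T \<Longrightarrow> op_fun T y = g - PM g"
  using op_fun_char(1)[OF rsT T_closed, of y g] by (simp add: TM PM_def)

lemma Ss_norm: "(x,f) \<in> S \<Longrightarrow> norm (op_fun S x) \<le> norm f"
  using op_fun_norm[OF rsS cS] .

lemma Ss_in: "x \<in> Dom S \<Longrightarrow> (x, op_fun S x) \<in> S"
  using op_fun_in(1)[OF rsS cS] .

end


context ctx begin

lemma sT: "P.subsp T" using rs_P[OF rsT] .
lemma sS: "P.subsp S" using rs_P[OF rsS] .

lemma norm_pair_le: "norm (a, b) \<le> norm a + norm b"
  using sqrt_sum_squares_le_sum_abs[of "norm a" "norm b"] by (simp add: norm_prod_def)

lemma part2:
  assumes cp: "compact_perturbation T S" and bd: "\<exists>K. \<forall>x\<in>Dom S. norm (op_fun T x) \<le> K * norm x"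
  shows "rel_compact B (op_fun S) (Dom S)"
proof -
  obtain K0 where K0: "\<And>x. x \<in> Dom S \<Longrightarrow> norm (op_fun T x) \<le> K0 * norm x" using bd by blast
  define PT where "PT = P.projn T"
  define PS where "PS = P.projn S"
  have cK: "copseq (\<lambda>p. PT p - PS p)"
    using cp unfolding compact_perturbation_def proj2_eq compact_operator_iff PT_def PS_def .
  show ?thesis unfolding rel_compact_iff relcseq_def
  proof (intro allI impI)
    fix x :: "nat \<Rightarrow> 'a" and c assume xs: "\<forall>n. x n \<in> Dom S \<and> norm (x n) + norm (op_fun S (x n)) \<le> c"
    define p where "p n = (x n, op_fun S (x n))" for n
    have pS: "p n \<in> S" for n using Ss_in xs by (simp add: p_def)
    have pn: "\<forall>n. norm (p n) \<le> c" using xs norm_pair_le order_trans unfolding p_def by blast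
    have Kp: "PT (p n) - PS (p n) = (0, B (x n)) - PT (0, B (x n))" for n
    proof -
      have q: "(x n, op_fun S (x n) + B (x n)) \<in> T" using K1 pS[of n] by (simp add: p_def)
      have "p n = (x n, op_fun S (x n) + B (x n)) - (0, B (x n))" by (simp add: p_def)
      hence "PT (p n) = (x n, op_fun S (x n) + B (x n)) - PT (0, B (x n))"
        using P.projn_diff[OF sT T_closed] P.projn_id[OF sT q] unfolding PT_def by metis
      moreover have "PS (p n) = p n" using P.projn_id[OF sS pS] unfolding PS_def .
      ultimately show ?thesis by (simp add: p_def)
    qed
    obtain r l where r: "strict_mono r" and l: "(\<lambda>n. PT (p (r n)) - PS (p (r n))) \<longlonglongrightarrow> l"
      using cK pn unfolding copseq_def by blast
    define z where "z n = PT (0, B (x n))" for n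
    define y where "y n = fst (z n)" for n
    define g where "g n = snd (z n)" for n
    have zT: "z n \<in> T" for n unfolding z_def PT_def using P.projn_in[OF sT T_closed] .
    have ygT: "(y n, g n) \<in> T" for n using zT[of n] by (simp add: y_def g_def)
    have yD: "y n \<in> Dom S" for n using ygT[of n] dom_eq by (auto simp: Dom_def)
    have l1: "(\<lambda>n. - y (r n)) \<longlonglongrightarrow> fst l"
      using tendsto_fst[OF l] by (simp add: Kp z_def[symmetric] y_def)
    hence yl: "(\<lambda>n. y (r n)) \<longlonglongrightarrow> - fst l" using tendsto_minus by fastforce
    have l2: "(\<lambda>n. B (x (r n)) - g (r n)) \<longlonglongrightarrow> snd l"
      using tendsto_snd[OF l] by (simp add: Kp z_def[symmetric] g_def)
    have decomp: "B (x n) = op_fun T (y n) + ((B (x n) - g n) - PM (B (x n) - g n))" for n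
    proof -
      have "PM (B (x n) - g n) = - PM (g n)" using PM_diff[of "B (x n)" "g n"] PM_B by simp
      thus ?thesis using Ts_char[OF ygT[of n]] by simp
    qed
    have lim2: "(\<lambda>n. (B (x (r n)) - g (r n)) - PM (B (x (r n)) - g (r n))) \<longlonglongrightarrow> snd l - PM (snd l)"
      using tendsto_diff[OF l2 X.projn_tendsto[OF sM cM l2]] unfolding PM_def .
    have Ca: "Cauchy (\<lambda>n. op_fun T (y (r n)))"
    proof (rule metric_CauchyI)
      fix e :: real assume e: "e > 0"
      define K1 where "K1 = \<bar>K0\<bar> + 1"
      have K1: "K1 > 0" by (simp add: K1_def)
      obtain N where N: "\<forall>m\<ge>N. \<forall>n\<ge>N. dist (y (r m)) (y (r n)) < e / K1"
        using metric_CauchyD[OF LIMSEQ_imp_Cauchy[OF yl]] e K1 by (metis divide_pos_pos)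
      show "\<exists>N. \<forall>m\<ge>N. \<forall>n\<ge>N. dist (op_fun T (y (r m))) (op_fun T (y (r n))) < e"
      proof (intro exI allI impI)
        fix m n assume m: "m \<ge> N" and n: "n \<ge> N"
        define d where "d = norm (y (r m) - y (r n))"
        have d: "d < e / K1" using N m n by (simp add: d_def dist_norm)
        have "op_fun T (y (r m)) - op_fun T (y (r n)) = op_fun T (y (r m) - y (r n))"
          using op_fun_diff[OF rsT T_closed] yD dom_eq by simp
        hence "norm (op_fun T (y (r m)) - op_fun T (y (r n))) \<le> K0 * d"
          using K0[OF dom_diff[OF rsS yD yD]] by (simp add: d_def)
        also have "\<dots> \<le> \<bar>K0\<bar> * d" by (simp add: d_def mult_right_mono)
        also have "\<dots> \<le> \<bar>K0\<bar> * (e / K1)" using d by (intro mult_left_mono) auto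
        also have "\<dots> < e" using e K1 by (simp add: K1_def field_simps)
        finally show "dist (op_fun T (y (r m))) (op_fun T (y (r n))) < e" by (simp add: dist_norm)
      qed
    qed
    then obtain t where t: "(\<lambda>n. op_fun T (y (r n))) \<longlonglongrightarrow> t" using Cauchy_convergent_iff convergent_def by blast
    have "(\<lambda>n. B (x (r n))) \<longlonglongrightarrow> t + (snd l - PM (snd l))"
      using tendsto_add[OF t lim2] by (subst decomp) simp
    thus "\<exists>r l. strict_mono r \<and> (\<lambda>n. B (x (r n))) \<longlonglongrightarrow> l" using r by blast
  qed
qed

end


lemma clin_diff: "clinear_map R \<Longrightarrow> R (u - v) = R u - R v"
proof -
  assume c: "clinear_map R"
  have "R (scaleC (-1) v) = scaleC (-1) (R v)" using c by (simp add: clinear_map_def)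
  hence "R (- v) = - R v" by (simp add: scaleC_minus1)
  moreover have "R (u + - v) = R u + R (- v)" using c unfolding clinear_map_def by blast
  ultimately show ?thesis by simp
qed

lemma clin_scaleR: "clinear_map R \<Longrightarrow> R (r *\<^sub>R u) = r *\<^sub>R R u"
  by (simp add: clinear_map_def scaleR_scaleC)

lemma clin_add: "clinear_map R \<Longrightarrow> R (u + v) = R u + R v"
  by (simp add: clinear_map_def)

lemma clin_zero: "clinear_map R \<Longrightarrow> R 0 = 0"
  using clin_diff[of R 0 0] by simp

context ctx begin

lemma B_add: "x \<in> Dom S \<Longrightarrow> y \<in> Dom S \<Longrightarrow> B (x + y) = B x + B y"
proof -
  assume x: "x \<in> Dom S" and y: "y \<in> Dom S"
  have my: "- y \<in> Dom S" using dom_sc[OF rsS y, of "-1"] by (simp add: scaleC_minus1)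
  have "B (- y) = - B y" using B_scaleR[OF y, of "-1"] by simp
  thus ?thesis using B_diff[OF x my] by simp
qed

lemma resolv:
  assumes "lam \<in> resolvent_set R"
  obtains RR where "clinear_map RR" "\<exists>K. \<forall>x. norm (RR x) \<le> K * norm x"
    "\<And>x f. (x,f) \<in> R \<Longrightarrow> RR (scaleC lam x - f) = x"
    "\<And>u. (RR u, scaleC lam (RR u) - u) \<in> R"
proof -
  obtain RR where c: "clinear_map RR" and K: "\<exists>K. \<forall>x. norm (RR x) \<le> K * norm x"
    and g: "relinv (relsum (scal_id lam) (relneg R)) = graph RR"
    using assms unfolding resolvent_set_def bounded_everywhere_op_def by blast
  have 1: "RR (scaleC lam x - f) = x" if "(x,f) \<in> R" for x f
  proof -
    have "(x, scaleC lam x + - f) \<in> relsum (scal_id lam) (relneg R)"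
      unfolding relsum_def scal_id_def relneg_def using that by blast
    hence "(scaleC lam x + - f, x) \<in> graph RR" unfolding g[symmetric] relinv_def by blast
    thus ?thesis by (simp add: graph_def)
  qed
  have 2: "(RR u, scaleC lam (RR u) - u) \<in> R" for u
  proof -
    have "(u, RR u) \<in> relinv (relsum (scal_id lam) (relneg R))" unfolding g by (simp add: graph_def)
    hence "(RR u, u) \<in> relsum (scal_id lam) (relneg R)" by (simp add: relinv_def)
    then obtain x a b where e: "(RR u, u) = (x, a + b)" and a: "(x,a) \<in> scal_id lam" and b: "(x,b) \<in> relneg R"
      unfolding relsum_def by blast
    from b obtain f where bf: "b = - f" and xf: "(x,f) \<in> R" unfolding relneg_def by blast
    have "a = scaleC lam x" using a unfolding scal_id_def by blast
    hence "scaleC lam x - u = f" using e bf by simp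
    moreover have "fst (RR u, u) = fst (x, a + b)" using e by (rule arg_cong)
    hence "RR u = x" by (simp only: fst_conv)
    ultimately show ?thesis using xf by simp
  qed
  show ?thesis using that c K 1 2 by blast
qed

lemma norm_sc: "norm (scaleC c (x::'a)) = cmod c * norm x"
  using X.norm_sc .

end


context ctx begin

lemma LV:
  assumes lT: "lam \<in> resolvent_set T" and lS: "lam \<in> resolvent_set S" and H: "relcseq B (op_fun S) (Dom S)"
  shows "\<forall>(s::nat \<Rightarrow> 'a\<times>'a) c. (\<forall>n. s n \<in> T \<and> norm (s n) \<le> c) \<longrightarrow> (\<exists>r l. strict_mono r \<and> (\<lambda>n. B (fst (s (r n)))) \<longlonglongrightarrow> l)"
proof -
  obtain RS where RSc: "clinear_map RS" and RSK: "\<exists>K. \<forall>x. norm (RS x) \<le> K * norm x"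
    and RS1: "\<And>x f. (x,f) \<in> S \<Longrightarrow> RS (scaleC lam x - f) = x"
    and RS2: "\<And>u. (RS u, scaleC lam (RS u) - u) \<in> S"
    using resolv[OF lS] by blast
  obtain RT where RTc: "clinear_map RT" and "\<exists>K. \<forall>x. norm (RT x) \<le> K * norm x"
    and RT1: "\<And>x f. (x,f) \<in> T \<Longrightarrow> RT (scaleC lam x - f) = x"
    and "\<And>u. (RT u, scaleC lam (RT u) - u) \<in> T"
    using resolv[OF lT] by blast
  obtain KS where KS: "\<And>x. norm (RS x) \<le> KS * norm x" using RSK by blast
  have RSD: "RS u \<in> Dom S" for u using RS2[of u] by (auto simp: Dom_def)
  define V where "V u = B (RS u)" for u
  have V_diff: "V (u - v) = V u - V v" for u v
    unfolding V_def using clin_diff[OF RSc] B_diff[OF RSD RSD] by simp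
  have V_add: "V (u + v) = V u + V v" for u v
    unfolding V_def using clin_add[OF RSc] B_add[OF RSD RSD] by simp
  have V_scaleR: "V (r *\<^sub>R u) = r *\<^sub>R V u" for r u
    unfolding V_def using clin_scaleR[OF RSc] B_scaleR[OF RSD] by simp
  have V_cop: "copseq V" unfolding copseq_def
  proof (intro allI impI)
    fix s :: "nat \<Rightarrow> 'a" and c assume sc: "\<forall>n. norm (s n) \<le> c"
    have c0: "c \<ge> 0" using sc norm_ge_zero order_trans by blast
    define y where "y n = RS (s n)" for n
    have ny: "norm (y n) \<le> \<bar>KS\<bar> * c" for n
    proof -
      have "norm (y n) \<le> KS * norm (s n)" using KS by (simp add: y_def)
      also have "\<dots> \<le> \<bar>KS\<bar> * norm (s n)" by (simp add: mult_right_mono)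
      also have "\<dots> \<le> \<bar>KS\<bar> * c" using sc by (simp add: mult_left_mono)
      finally show ?thesis .
    qed
    have nSy: "norm (op_fun S (y n)) \<le> cmod lam * (\<bar>KS\<bar> * c) + c" for n
    proof -
      have "norm (op_fun S (y n)) \<le> norm (scaleC lam (y n) - s n)" using Ss_norm RS2 by (simp add: y_def)
      also have "\<dots> \<le> norm (scaleC lam (y n)) + norm (s n)" by (rule norm_triangle_ineq4)
      also have "\<dots> \<le> cmod lam * (\<bar>KS\<bar> * c) + c"
        using ny[of n] sc by (simp add: norm_sc add_mono mult_left_mono)
      finally show ?thesis .
    qed
    have "\<forall>n. y n \<in> Dom S \<and> norm (y n) + norm (op_fun S (y n)) \<le> \<bar>KS\<bar> * c + (cmod lam * (\<bar>KS\<bar> * c) + c)"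
    proof
      fix n show "y n \<in> Dom S \<and> norm (y n) + norm (op_fun S (y n)) \<le> \<bar>KS\<bar> * c + (cmod lam * (\<bar>KS\<bar> * c) + c)"
        using ny[of n] nSy[of n] RSD[of "s n"] unfolding y_def by linarith
    qed
    then obtain r l where "strict_mono r" "(\<lambda>n. B (y (r n))) \<longlonglongrightarrow> l" using H unfolding relcseq_def by blast
    thus "\<exists>r l. strict_mono r \<and> (\<lambda>n. V (s (r n))) \<longlonglongrightarrow> l" by (auto simp: V_def y_def)
  qed
  obtain KV where KV: "\<And>u. norm (V u) \<le> KV * norm u" using copseq_bounded[OF V_cop V_scaleR] by blast
  have V_tendsto: "(\<lambda>n. V (v n)) \<longlonglongrightarrow> V y0" if vy: "v \<longlonglongrightarrow> y0" for v y0
  proof -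
    have z: "(\<lambda>n. \<bar>KV\<bar> * norm (v n - y0)) \<longlonglongrightarrow> 0"
      using vy by (intro tendsto_mult_right_zero) (simp add: LIM_zero_iff tendsto_norm_zero)
    have le: "norm (V (v n) - V y0) \<le> \<bar>KV\<bar> * norm (v n - y0)" for n
      using KV[of "v n - y0"] V_diff[of "v n" y0] by (smt (verit) mult_right_mono norm_ge_zero abs_ge_self)
    show ?thesis
      apply (rule LIM_zero_cancel)
      apply (rule Lim_null_comparison[OF _ z])
      using le by (simp add: always_eventually)
  qed
  have V_inj: "y0 = 0" if fix0: "V y0 = y0" for y0
  proof -
    define x0 where "x0 = RS y0"
    have "(x0, scaleC lam x0 - y0) \<in> S" using RS2 by (simp add: x0_def)
    from K1[OF this] have "(x0, scaleC lam x0 - y0 + B x0) \<in> T" .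
    moreover have "B x0 = y0" using fix0 by (simp add: V_def x0_def)
    ultimately have "(x0, scaleC lam x0) \<in> T" by simp
    from RT1[OF this] have "x0 = 0" using clin_zero[OF RTc] by simp
    thus ?thesis using fix0 B_zero by (simp add: V_def x0_def[symmetric])
  qed
  show ?thesis
  proof (intro allI impI)
    fix s :: "nat \<Rightarrow> 'a\<times>'a" and c assume sc: "\<forall>n. s n \<in> T \<and> norm (s n) \<le> c"
    define x where "x n = fst (s n)" for n
    define f where "f n = snd (s n)" for n
    define w where "w n = B (x n)" for n
    define a where "a n = scaleC lam (x n) - f n" for n
    have xfT: "(x n, f n) \<in> T" for n using sc by (simp add: x_def f_def)
    have xD: "x n \<in> Dom S" for n using K2(1)[OF xfT] .
    have RSx: "RS (a n + w n) = x n" for n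
      using RS1[OF K2(2)[OF xfT[of n]]] by (simp add: a_def w_def algebra_simps)
    have wV: "w n = V (a n) + V (w n)" for n
      using RSx[of n] V_add[of "a n" "w n"] by (simp add: V_def w_def)
    define ca where "ca = cmod lam * c + c"
    have na: "norm (a n) \<le> ca" for n
    proof -
      have nx: "norm (x n) \<le> c" using sc norm_fst_le[of "x n" "f n"] by (metis x_def f_def prod.collapse order_trans)
      have nf: "norm (f n) \<le> c" using sc norm_snd_le[of "f n" "x n"] by (metis x_def f_def prod.collapse order_trans)
      have "norm (a n) \<le> cmod lam * norm (x n) + norm (f n)"
        using norm_triangle_ineq4[of "scaleC lam (x n)" "f n"] by (simp add: a_def norm_sc)
      also have "\<dots> \<le> ca" unfolding ca_def using nx nf by (intro add_mono mult_left_mono) auto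
      finally show ?thesis .
    qed
    have ca0: "ca \<ge> 0" using na[of 0] norm_ge_zero order_trans by blast
    have wbd: "\<exists>cw. \<forall>n. norm (w n) \<le> cw"
    proof (rule ccontr)
      assume "\<not> ?thesis"
      hence "\<forall>k::nat. \<exists>n. norm (w n) > real k + 1" by (metis not_le)
      then obtain nk where nk: "\<And>k. norm (w (nk k)) > real k + 1" by metis
      define nw where "nw k = norm (w (nk k))" for k
      have nw0: "nw k > 0" for k
      proof -
        have "real k + 1 > 0" by simp
        thus ?thesis using nk[of k] unfolding nw_def by linarith
      qed
      define v where "v k = inverse (nw k) *\<^sub>R w (nk k)" for k
      define b where "b k = inverse (nw k) *\<^sub>R a (nk k)" for k
      have nv: "norm (v k) = 1" for k using nw0[of k] by (simp add: v_def nw_def)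
      have vV: "v k = V (b k) + V (v k)" for k
        using wV[of "nk k"] by (simp add: v_def b_def V_scaleR scaleR_add_right[symmetric])
      have Vb: "(\<lambda>k. V (b k)) \<longlonglongrightarrow> 0"
      proof -
        have z: "(\<lambda>k. \<bar>KV\<bar> * ca * inverse (real (Suc k))) \<longlonglongrightarrow> 0"
          by (intro tendsto_mult_right_zero LIMSEQ_inverse_real_of_nat)
        have le: "norm (V (b k)) \<le> \<bar>KV\<bar> * ca * inverse (real (Suc k))" for k
        proof -
          have "norm (b k) = inverse (nw k) * norm (a (nk k))" using nw0[of k] by (simp add: b_def)
          also have "\<dots> \<le> inverse (real (Suc k)) * ca"
          proof (rule mult_mono)
            show "inverse (nw k) \<le> inverse (real (Suc k))"
              using nk[of k] by (intro le_imp_inverse_le) (auto simp: nw_def)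
          qed (use na ca0 in auto)
          finally have nb: "norm (b k) \<le> inverse (real (Suc k)) * ca" .
          have "norm (V (b k)) \<le> \<bar>KV\<bar> * norm (b k)"
            using KV[of "b k"] by (smt (verit) mult_right_mono norm_ge_zero abs_ge_self)
          also have "\<dots> \<le> \<bar>KV\<bar> * (inverse (real (Suc k)) * ca)" using nb by (intro mult_left_mono) auto
          finally show ?thesis by (simp add: algebra_simps)
        qed
        show ?thesis
          apply (rule Lim_null_comparison[OF _ z])
          using le by (simp add: always_eventually)
      qed
      have "\<forall>k. norm (v k) \<le> 1" using nv by simp
      then obtain r y0 where r: "strict_mono r" and Vv: "(\<lambda>k. V (v (r k))) \<longlonglongrightarrow> y0"
        using V_cop unfolding copseq_def by blast
      have Vbr: "(\<lambda>k. V (b (r k))) \<longlonglongrightarrow> 0" using LIMSEQ_subseq_LIMSEQ[OF Vb r] by (simp add: o_def)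
      have vr: "(\<lambda>k. v (r k)) \<longlonglongrightarrow> y0"
        using tendsto_add[OF Vbr Vv] by (subst vV) simp
      have "(\<lambda>k. norm (v (r k))) \<longlonglongrightarrow> norm y0" using tendsto_norm[OF vr] .
      hence ny0: "norm y0 = 1" using nv by (simp add: LIMSEQ_const_iff)
      have "V y0 = y0" using LIMSEQ_unique[OF V_tendsto[OF vr] Vv] .
      hence "y0 = 0" by (rule V_inj)
      thus False using ny0 by simp
    qed
    then obtain cw where cw: "\<And>n. norm (w n) \<le> cw" by blast
    obtain r1 l1 where r1: "strict_mono r1" and l1: "(\<lambda>n. V (a (r1 n))) \<longlonglongrightarrow> l1"
      using V_cop na unfolding copseq_def by blast
    have "\<forall>n. norm ((w \<circ> r1) n) \<le> cw" using cw by simp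
    then obtain r2 l2 where r2: "strict_mono r2" and l2: "(\<lambda>n. V ((w \<circ> r1) (r2 n))) \<longlonglongrightarrow> l2"
      using V_cop unfolding copseq_def by blast
    have l1': "(\<lambda>n. V (a (r1 (r2 n)))) \<longlonglongrightarrow> l1" using LIMSEQ_subseq_LIMSEQ[OF l1 r2] by (simp add: o_def)
    have "(\<lambda>n. w (r1 (r2 n))) \<longlonglongrightarrow> l1 + l2"
      using tendsto_add[OF l1' l2] by (subst wV) (simp add: o_def)
    moreover have "strict_mono (r1 \<circ> r2)" using r1 r2 by (rule strict_mono_o)
    ultimately show "\<exists>r l. strict_mono r \<and> (\<lambda>n. B (fst (s (r n)))) \<longlonglongrightarrow> l"
      by (auto simp: o_def w_def x_def)
  qed
qed

end


context ctx begin

lemma part1: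
  assumes rho: "resolvent_set T \<inter> resolvent_set S \<noteq> {}" and H0: "rel_compact B (op_fun S) (Dom S)"
  shows "compact_perturbation T S"
proof -
  obtain lam where lT: "lam \<in> resolvent_set T" and lS: "lam \<in> resolvent_set S" using rho by blast
  have H: "relcseq B (op_fun S) (Dom S)" using H0 rel_compact_iff by blast
  note LV = LV[OF lT lS H]
  define PT where "PT = P.projn T"
  define PS where "PS = P.projn S"
  have PT_in: "PT p \<in> T" for p unfolding PT_def using P.projn_in[OF sT T_closed] .
  have PS_in: "PS p \<in> S" for p unfolding PS_def using P.projn_in[OF sS cS] .
  have PT_diff: "PT (p - q) = PT p - PT q" for p q unfolding PT_def using P.projn_diff[OF sT T_closed] .
  have PS_diff: "PS (p - q) = PS p - PS q" for p q unfolding PS_def using P.projn_diff[OF sS cS] .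
  have PS_add: "PS (p + q) = PS p + PS q" for p q unfolding PS_def using P.projn_add[OF sS cS] .
  have PT_id: "q \<in> T \<Longrightarrow> PT q = q" for q unfolding PT_def using P.projn_id[OF sT] .
  have PS_id: "q \<in> S \<Longrightarrow> PS q = q" for q unfolding PS_def using P.projn_id[OF sS] .
  have PT_tend: "(\<lambda>n. PT (s n)) \<longlonglongrightarrow> PT l" if "s \<longlonglongrightarrow> l" for s l
    unfolding PT_def using P.projn_tendsto[OF sT T_closed that] .
  have PS_tend: "(\<lambda>n. PS (s n)) \<longlonglongrightarrow> PS l" if "s \<longlonglongrightarrow> l" for s l
    unfolding PS_def using P.projn_tendsto[OF sS cS that] .
  have PT_norm: "norm (PT p) \<le> norm p" for p unfolding PT_def using P.projn_norm[OF sT T_closed] .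
  have PS_norm: "norm (PS p) \<le> norm p" for p unfolding PS_def using P.projn_norm[OF sS cS] .
  have PT_norm2: "norm (p - PT p) \<le> norm p" for p unfolding PT_def using P.projn_norm2[OF sT T_closed] .
  have PT_sa: "pinner (PT p) q = pinner p (PT q)" for p q unfolding PT_def using P.projn_selfadj[OF sT T_closed] .
  have PS_sa: "pinner (PS p) q = pinner p (PS q)" for p q unfolding PS_def using P.projn_selfadj[OF sS cS] .
  define C1 where "C1 p = PS p - PT (PS p)" for p
  define C2 where "C2 p = PT p - PS (PT p)" for p
  define E where "E p = PS (p - PT p)" for p
  have C1_eq: "C1 p = PT (0, B (fst (PS p))) - (0, B (fst (PS p)))" for p
  proof -
    obtain x f where q: "PS p = (x, f)" by fastforce
    have xfS: "(x, f) \<in> S" using PS_in[of p] q by simp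
    have q1: "(x, f + B x) \<in> T" using K1[OF xfS] .
    have "(x, f) = (x, f + B x) - (0, B x)" by simp
    hence "PT (x, f) = (x, f + B x) - PT (0, B x)" using PT_diff PT_id[OF q1] by metis
    thus ?thesis by (simp add: C1_def q)
  qed
  have C2_eq: "C2 p = (0, B (fst (PT p))) - PS (0, B (fst (PT p)))" for p
  proof -
    obtain x f where q: "PT p = (x, f)" by fastforce
    have xfT: "(x, f) \<in> T" using PT_in[of p] q by simp
    have q1: "(x, f - B x) \<in> S" using K2(2)[OF xfT] .
    have "(x, f) = (x, f - B x) + (0, B x)" by simp
    hence "PS (x, f) = (x, f - B x) + PS (0, B x)" using PS_add PS_id[OF q1] by metis
    thus ?thesis by (simp add: C2_def q)
  qed
  have cC1: "copseq C1" unfolding copseq_def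
  proof (intro allI impI)
    fix s :: "nat \<Rightarrow> 'a \<times> 'a" and c assume sc: "\<forall>n. norm (s n) \<le> c"
    define x where "x n = fst (PS (s n))" for n
    have xb: "\<forall>n. x n \<in> Dom S \<and> norm (x n) + norm (op_fun S (x n)) \<le> c + c"
    proof
      fix n
      obtain xx f where q: "PS (s n) = (xx, f)" by fastforce
      have xfS: "(xx, f) \<in> S" using PS_in[of "s n"] q by simp
      have "norm (PS (s n)) \<le> c" using PS_norm[of "s n"] sc order_trans by blast
      hence nx: "norm xx \<le> c" and nf: "norm f \<le> c" using norm_fst_le[of xx f] norm_snd_le[of f xx] q by auto
      have "norm (op_fun S xx) \<le> norm f" using Ss_norm[OF xfS] .
      moreover have "xx \<in> Dom S" using xfS by (auto simp: Dom_def)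
      ultimately show "x n \<in> Dom S \<and> norm (x n) + norm (op_fun S (x n)) \<le> c + c"
        using nx nf by (simp add: x_def q)
    qed
    then obtain r l where r: "strict_mono r" and l: "(\<lambda>n. B (x (r n))) \<longlonglongrightarrow> l"
      using H unfolding relcseq_def by blast
    have l0: "(\<lambda>n. (0::'a, B (x (r n)))) \<longlonglongrightarrow> (0, l)" using l by (intro tendsto_Pair tendsto_const)
    have "(\<lambda>n. C1 (s (r n))) \<longlonglongrightarrow> PT (0, l) - (0, l)"
      unfolding C1_eq x_def[symmetric] using tendsto_diff[OF PT_tend[OF l0] l0] .
    thus "\<exists>r l. strict_mono r \<and> (\<lambda>n. C1 (s (r n))) \<longlonglongrightarrow> l" using r by blast
  qed
  have cC2: "copseq C2" unfolding copseq_def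
  proof (intro allI impI)
    fix s :: "nat \<Rightarrow> 'a \<times> 'a" and c assume sc: "\<forall>n. norm (s n) \<le> c"
    have "\<forall>n. (PT \<circ> s) n \<in> T \<and> norm ((PT \<circ> s) n) \<le> c" using PT_in PT_norm sc order_trans by (simp add: o_def) blast
    then obtain r l where r: "strict_mono r" and l: "(\<lambda>n. B (fst ((PT \<circ> s) (r n)))) \<longlonglongrightarrow> l"
      using LV by blast
    have l0: "(\<lambda>n. (0::'a, B (fst (PT (s (r n)))))) \<longlonglongrightarrow> (0, l)" using l by (intro tendsto_Pair tendsto_const) (simp add: o_def)
    have "(\<lambda>n. C2 (s (r n))) \<longlonglongrightarrow> (0, l) - PS (0, l)"
      unfolding C2_eq using tendsto_diff[OF l0 PS_tend[OF l0]] .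
    thus "\<exists>r l. strict_mono r \<and> (\<lambda>n. C2 (s (r n))) \<longlonglongrightarrow> l" using r by blast
  qed
  have cE: "copseq E"
  proof (rule P.adj_copseq[OF cC1])
    fix p q
    have "pinner (C1 p) q = pinner (PS p) q - pinner (PT (PS p)) q" by (simp add: C1_def P.ip_diff_left)
    also have "\<dots> = pinner (PS p) q - pinner (PS p) (PT q)" by (simp add: PT_sa)
    also have "\<dots> = pinner (PS p) (q - PT q)" by (simp add: P.ip_diff_right)
    also have "\<dots> = pinner p (E q)" by (simp add: PS_sa E_def)
    finally show "pinner (C1 p) q = pinner p (E q)" .
    show "C1 (p - q) = C1 p - C1 q" by (simp add: C1_def PS_diff PT_diff)
    show "E (p - q) = E p - E q" by (simp add: E_def PS_diff PT_diff)
    show "norm (E p) \<le> norm p" unfolding E_def using PS_norm PT_norm2 order_trans by blast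
  qed
  have "copseq (\<lambda>p. C2 p - E p)" using copseq_diff[OF cC2 cE] .
  moreover have "(\<lambda>p. C2 p - E p) = (\<lambda>p. PT p - PS p)"
    by (rule ext) (simp add: C2_def E_def PS_diff)
  ultimately have "copseq (\<lambda>p. PT p - PS p)" by simp
  thus ?thesis unfolding compact_perturbation_def proj2_eq compact_operator_iff PT_def PS_def .
qed

end

theorem theorem3p5:
  fixes T S A :: "('a::chilbert_space \<times> 'a) set"
  assumes T_closed: "closed T" and T_herm: "hermitian T"
    and A_closed: "closed A" and A_herm: "hermitian A"
    and S_sa: "self_adjoint S"
    and dom_eq: "Dom T = Dom S" and dom_sub: "Dom S \<subseteq> Dom A"
    and T_sum: "T = relsum S A"
    and rho: "resolvent_set T \<inter> resolvent_set S \<noteq> {}"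
  shows "(rel_compact (\<lambda>x. proj (ortho (relapp S 0)) (op_fun A x)) (op_fun S) (Dom S)
            \<longrightarrow> compact_perturbation T S)
       \<and> (compact_perturbation T S \<and> (\<exists>K. \<forall>x\<in>Dom S. norm (op_fun T x) \<le> K * norm x)
            \<longrightarrow> rel_compact (\<lambda>x. proj (ortho (relapp S 0)) (op_fun A x)) (op_fun S) (Dom S))"
proof -
  interpret c: ctx T S A using assms by unfold_locales
  have Beq: "(\<lambda>x. proj (ortho (relapp S 0)) (op_fun A x)) = c.B" by (rule ext) (simp add: c.B_def)
  show ?thesis unfolding Beq using c.part1[OF rho] c.part2 by blast
qed

end
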